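(* Let $\Omega\subset\mathbb R^2$ be a domain, $u\in SBV(\Omega)$ a local minimizer of the Mumford--Shah problem, and suppose $0\in\overline{S}_u$ is a tip point. Let $r_3:=\frac12\operatorname{dist}(0,\partial\Omega)$ and let $J\ge1$ be the absolute constant described in the context. Then there exist $C=C(J)>0$, $N=N(J)\in\mathbb N$ and $J'=J'(J)>0$ such that for every $0<r<r_3/9$, the set $B_r\setminus\overline{S}_u$ is covered by the closures of at most $N$ $J'$-John domains $W_{j,r}\subset B_{Cr}\setminus\overline{S}_u$, $1\le j\le N$. Moreover, there is a constant $C_2=C_2(J)>0$ such that for each $j$ and every $x\in W_{j,r}$ there is a rectifiable curve $\beta_x\subset W_{j,r}$ joining $x$ to a point $w_{j,r}\in\partial B_{3r}\cap W_{j,r}$ which is the core of a $J'$-carrot and satisfies $\ell(\beta_x)\le C_2 r$.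
   Context: $B_r$ is the open disk of radius $r$ centered at $0$. $S_u$ is the approximate discontinuity set of $u\in BV(\Omega)$; $SBV(\Omega)$ consists of $u\in BV(\Omega)$ whose singular derivative is the jump part $(u_+-u_-)\nu_u\mathcal H^1\llcorner S_u$. With $MS(u,U)=\int_U|Du|^2dx+\mathcal H^1(S_u\cap U)$, $u\in SBV_{loc}(\Omega)$ is a local minimizer if for every ball $B_\rho(z)\subset\Omega$ and every open $U\subset\subset\Omega\cap B_\rho(z)$, $MS(u,U)<\infty$ and $MS(u,U)\le MS(v,U)$ whenever $\{u\neq v\}\subset\subset U$. A tip point is a point of $\overline{S}_u\setminus S_u$. The constant $J$ is the absolute constant (from a known result of David) with the property: for every $x\in\Omega\setminus\overline S_u$ and every $0<\rho\le\frac12\operatorname{dist}(x,\partial\Omega)$ there is an arc $\gamma\subset\Omega\setminus\overline S_u$ starting at $x$ and leaving $B_\rho(x)$ such that $\ell(\gamma[x,y])\le J\operatorname{dist}(y,\overline S_u)$ for all $y\in\gamma$. A bounded domain $W$ is $J'$-John with center $x_0$ if every $x\in W$ is joined to $x_0$ by an arc $\gamma\subset W$ with $\ell(\gamma[x,y])\le J'\operatorname{dist}(y,\partial W)$ for all $y\in\gamma$. For a curve $\gamma$ from $x$ to $x_0$, the $J'$-carrot with vertex $x$ and core $\gamma$ is $car(\gamma,J')=\bigcup\{B(y,\ell(\gamma[x,y])/J'):y\in\gamma\setminus\{x\}\}$; "$\beta_x$ is the core of a $J'$-carrot" means $car(\beta_x,J')\subset W_{j,r}$. *)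

theory Defs
  imports "HOL-Analysis.Analysis"
begin

type_synonym pt = "real^2"

definition partitions01 :: "(nat \<times> (nat \<Rightarrow> real)) set" where
  "partitions01 = {(n, t). t 0 = 0 \<and> t n = 1 \<and> (\<forall>i<n. t i \<le> t (Suc i))}"

definition path_length :: "(real \<Rightarrow> pt) \<Rightarrow> ennreal" where
  "path_length g = (SUP p \<in> partitions01.
      ennreal (\<Sum>i<fst p. dist (g (snd p (Suc i))) (g (snd p i))))"

text \<open>one-dimensional Hausdorff (outer) measure, normalised so that H^1 = length\<close>
definition hausdorff1 :: "pt set \<Rightarrow> ennreal" where
  "hausdorff1 A = (SUP \<delta> \<in> {0<..}.
      INF C \<in> {C :: nat \<Rightarrow> pt set. A \<subseteq> \<Union>(range C) \<and>
                 (\<forall>i. bounded (C i) \<and> diameter (C i) \<le> \<delta>)}.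
        (\<Sum>i. ennreal (diameter (C i))))"

definition hausdorff1_measure :: "pt measure" where
  "hausdorff1_measure = measure_of UNIV (sets borel) hausdorff1"

definition ball_avg :: "(pt \<Rightarrow> real) \<Rightarrow> pt \<Rightarrow> real \<Rightarrow> real \<Rightarrow> real" where
  "ball_avg u x z r = (LINT y:ball x r|lborel. \<bar>u y - z\<bar>) / measure lborel (ball x r)"

definition approx_disc :: "pt set \<Rightarrow> (pt \<Rightarrow> real) \<Rightarrow> pt set" where
  "approx_disc U u = {x \<in> U. \<not> (\<exists>z. ((ball_avg u x z) \<longlongrightarrow> 0) (at_right 0))}"

text \<open>x is an approximate jump point with value a on the side where (y-x).nu > 0
  (the trace u^+) and b on the other side (u^-)\<close>
definition approx_jump :: "(pt \<Rightarrow> real) \<Rightarrow> pt \<Rightarrow> real \<Rightarrow> real \<Rightarrow> pt \<Rightarrow> bool" where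
  "approx_jump u x a b \<nu> \<longleftrightarrow> a \<noteq> b \<and> norm \<nu> = 1 \<and>
     ((\<lambda>r. (LINT y:{y \<in> ball x r. (y - x) \<bullet> \<nu> > 0}|lborel. \<bar>u y - a\<bar>)
            / measure lborel {y \<in> ball x r. (y - x) \<bullet> \<nu> > 0}) \<longlongrightarrow> 0) (at_right 0) \<and>
     ((\<lambda>r. (LINT y:{y \<in> ball x r. (y - x) \<bullet> \<nu> < 0}|lborel. \<bar>u y - b\<bar>)
            / measure lborel {y \<in> ball x r. (y - x) \<bullet> \<nu> < 0}) \<longlongrightarrow> 0) (at_right 0)"

definition jump_set :: "pt set \<Rightarrow> (pt \<Rightarrow> real) \<Rightarrow> pt set" where
  "jump_set U u = {x \<in> U. \<exists>a b \<nu>. approx_jump u x a b \<nu>}"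

text \<open>(u^+ - u^-) nu_u, well defined on the jump set\<close>
definition jump_vec :: "(pt \<Rightarrow> real) \<Rightarrow> pt \<Rightarrow> pt" where
  "jump_vec u x = (THE v. \<exists>a b \<nu>. approx_jump u x a b \<nu> \<and> v = (a - b) *\<^sub>R \<nu>)"

definition test_fun :: "pt set \<Rightarrow> (pt \<Rightarrow> real) \<Rightarrow> (pt \<Rightarrow> pt) \<Rightarrow> bool" where
  "test_fun U \<phi> D\<phi> \<longleftrightarrow> (\<forall>x. (\<phi> has_derivative (\<lambda>h. D\<phi> x \<bullet> h)) (at x)) \<and>
     continuous_on UNIV D\<phi> \<and> compact (closure {x. \<phi> x \<noteq> 0}) \<and> closure {x. \<phi> x \<noteq> 0} \<subseteq> U"

text \<open>Du = g L^2 + (u^+ - u^-) nu_u H^1 restricted to the jump set, with g in L^1 and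
  finite jump part (so Du is a finite measure: u in BV, and D^s u is the jump part)\<close>
definition sbv_decomp :: "pt set \<Rightarrow> (pt \<Rightarrow> real) \<Rightarrow> (pt \<Rightarrow> pt) \<Rightarrow> bool" where
  "sbv_decomp U u g \<longleftrightarrow>
     (\<forall>i. set_integrable lborel U (\<lambda>x. g x $ i)) \<and>
     set_integrable hausdorff1_measure (jump_set U u) (\<lambda>x. norm (jump_vec u x)) \<and>
     (\<forall>\<phi> D\<phi>. test_fun U \<phi> D\<phi> \<longrightarrow> (\<forall>i.
        (LINT x:U|lborel. u x * D\<phi> x $ i) =
          - (LINT x:U|lborel. g x $ i * \<phi> x)
          - (LINT x:jump_set U u|hausdorff1_measure. jump_vec u x $ i * \<phi> x)))"

definition sbv :: "pt set \<Rightarrow> (pt \<Rightarrow> real) \<Rightarrow> bool" where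
  "sbv U u \<longleftrightarrow> u \<in> borel_measurable lborel \<and> set_integrable lborel U u \<and> (\<exists>g. sbv_decomp U u g)"

definition sbv_loc :: "pt set \<Rightarrow> (pt \<Rightarrow> real) \<Rightarrow> bool" where
  "sbv_loc \<Omega> u \<longleftrightarrow> (\<forall>U. open U \<and> compact (closure U) \<and> closure U \<subseteq> \<Omega> \<longrightarrow> sbv U u)"

text \<open>absolutely continuous part of Du (approximate gradient), defined a.e.\<close>
definition sbv_grad :: "pt set \<Rightarrow> (pt \<Rightarrow> real) \<Rightarrow> pt \<Rightarrow> pt" where
  "sbv_grad U u = (SOME g. sbv_decomp U u g)"

definition MS :: "(pt \<Rightarrow> real) \<Rightarrow> pt set \<Rightarrow> ennreal" where
  "MS u U = (\<integral>\<^sup>+x\<in>U. ennreal ((norm (sbv_grad U u x))\<^sup>2) \<partial>lborel) + hausdorff1 (approx_disc U u \<inter> U)"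

definition MS_local_minimizer :: "pt set \<Rightarrow> (pt \<Rightarrow> real) \<Rightarrow> bool" where
  "MS_local_minimizer \<Omega> u \<longleftrightarrow> sbv_loc \<Omega> u \<and>
     (\<forall>z \<rho> U. ball z \<rho> \<subseteq> \<Omega> \<and> open U \<and> compact (closure U) \<and> closure U \<subseteq> \<Omega> \<inter> ball z \<rho> \<longrightarrow>
        MS u U < \<infinity> \<and>
        (\<forall>v. sbv_loc \<Omega> v \<and> compact (closure {x. u x \<noteq> v x}) \<and> closure {x. u x \<noteq> v x} \<subseteq> U
              \<longrightarrow> MS u U \<le> MS v U))"

definition david_property :: "pt set \<Rightarrow> pt set \<Rightarrow> real \<Rightarrow> bool" where
  "david_property \<Omega> K J \<longleftrightarrow>
     (\<forall>x \<in> \<Omega> - K. \<forall>\<rho>. 0 < \<rho> \<and> \<rho> \<le> infdist x (frontier \<Omega>) / 2 \<longrightarrow>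
        (\<exists>\<gamma>. arc \<gamma> \<and> pathstart \<gamma> = x \<and> path_image \<gamma> \<subseteq> \<Omega> - K \<and>
              \<not> path_image \<gamma> \<subseteq> ball x \<rho> \<and>
              (\<forall>t\<in>{0..1}. path_length (subpath 0 t \<gamma>) \<le> ennreal (J * infdist (\<gamma> t) K))))"

definition john_domain :: "pt set \<Rightarrow> real \<Rightarrow> pt \<Rightarrow> bool" where
  "john_domain W J' x0 \<longleftrightarrow> open W \<and> connected W \<and> bounded W \<and> x0 \<in> W \<and>
     (\<forall>x \<in> W. x = x0 \<or> (\<exists>\<gamma>. arc \<gamma> \<and> pathstart \<gamma> = x \<and> pathfinish \<gamma> = x0 \<and> path_image \<gamma> \<subseteq> W \<and>
        (\<forall>t\<in>{0..1}. path_length (subpath 0 t \<gamma>) \<le> ennreal (J' * infdist (\<gamma> t) (frontier W)))))"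

definition carrot :: "(real \<Rightarrow> pt) \<Rightarrow> real \<Rightarrow> pt set" where
  "carrot \<beta> J' = \<Union> {ball (\<beta> t) (enn2real (path_length (subpath 0 t \<beta>)) / J') | t.
                        t \<in> {0<..1} \<and> \<beta> t \<noteq> pathstart \<beta>}"

end

theory Submission
  imports Defs
begin


definition lenle :: "(real \<Rightarrow> pt) \<Rightarrow> real \<Rightarrow> real \<Rightarrow> real \<Rightarrow> bool" where
  "lenle f a b B \<longleftrightarrow> (\<forall>n s. s 0 = a \<and> s n = b \<and> (\<forall>i<n. s i \<le> s (Suc i)) \<longrightarrow>
      (\<Sum>i<n. dist (f (s (Suc i))) (f (s i))) \<le> B)"

lemma mono_seq:
  fixes s :: "nat \<Rightarrow> real"
  assumes "\<forall>i<n. s i \<le> s (Suc i)" "i \<le> j" "j \<le> n"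
  shows "s i \<le> s j"
  using assms(2,3)
proof (induction j)
  case 0 then show ?case by simp
next
  case (Suc j)
  show ?case
  proof (cases "i = Suc j")
    case True then show ?thesis by simp
  next
    case False
    then have "i \<le> j" using Suc.prems by simp
    then have "s i \<le> s j" using Suc by simp
    also have "s j \<le> s (Suc j)" using assms(1) Suc.prems by simp
    finally show ?thesis .
  qed
qed

lemma seq_range:
  fixes s :: "nat \<Rightarrow> real"
  assumes "\<forall>i<n. s i \<le> s (Suc i)" "i \<le> n"
  shows "s 0 \<le> s i" "s i \<le> s n"
  using mono_seq[OF assms(1)] assms(2) by auto

lemma lenle_mono: "lenle f a b B \<Longrightarrow> B \<le> B' \<Longrightarrow> lenle f a b B'"
  unfolding lenle_def using order_trans by blast

lemma lenle_dist:
  assumes "lenle f a b B" "a \<le> b"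
  shows "dist (f a) (f b) \<le> B"
proof -
  define s where "s = (\<lambda>i::nat. if i = 0 then a else b)"
  have "(\<Sum>i<1. dist (f (s (Suc i))) (f (s i))) \<le> B"
    using assms unfolding lenle_def by (erule_tac x=1 in allE, erule_tac x=s in allE) (simp add: s_def)
  then show ?thesis by (simp add: s_def dist_commute)
qed

lemma lenle_nonneg: "lenle f a b B \<Longrightarrow> a \<le> b \<Longrightarrow> 0 \<le> B"
  using lenle_dist zero_le_dist order_trans by metis

lemma lenle_zero:
  assumes "0 \<le> B" shows "lenle f a a B"
  unfolding lenle_def
proof (intro allI impI)
  fix n and s :: "nat \<Rightarrow> real"
  assume h: "s 0 = a \<and> s n = a \<and> (\<forall>i<n. s i \<le> s (Suc i))"
  have "\<forall>i\<le>n. s i = a" using seq_range[of n s] h by (metis order_antisym)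
  then have "(\<Sum>i<n. dist (f (s (Suc i))) (f (s i))) = 0" by (intro sum.neutral) auto
  then show "(\<Sum>i<n. dist (f (s (Suc i))) (f (s i))) \<le> B" using assms by simp
qed

lemma lenle_reparam:
  assumes mono: "\<And>x y. a \<le> x \<Longrightarrow> x \<le> y \<Longrightarrow> y \<le> b \<Longrightarrow> \<phi> x \<le> \<phi> y"
    and L: "lenle f (\<phi> a) (\<phi> b) B"
  shows "lenle (\<lambda>x. f (\<phi> x)) a b B"
  unfolding lenle_def
proof (intro allI impI)
  fix n and s :: "nat \<Rightarrow> real"
  assume h: "s 0 = a \<and> s n = b \<and> (\<forall>i<n. s i \<le> s (Suc i))"
  have rng: "a \<le> s i \<and> s i \<le> b" if "i \<le> n" for i using seq_range[of n s i] h that by auto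
  have "\<forall>i<n. \<phi> (s i) \<le> \<phi> (s (Suc i))"
    using rng h by (intro allI impI mono) auto
  then show "(\<Sum>i<n. dist (f (\<phi> (s (Suc i)))) (f (\<phi> (s i)))) \<le> B"
    using L h unfolding lenle_def by (erule_tac x=n in allE, erule_tac x="\<lambda>i. \<phi> (s i)" in allE) simp
qed

lemma lenle_cong:
  assumes "\<And>x. a \<le> x \<Longrightarrow> x \<le> b \<Longrightarrow> f x = g x" "lenle f a b B"
  shows "lenle g a b B"
  unfolding lenle_def
proof (intro allI impI)
  fix n and s :: "nat \<Rightarrow> real"
  assume h: "s 0 = a \<and> s n = b \<and> (\<forall>i<n. s i \<le> s (Suc i))"
  have rng: "a \<le> s i \<and> s i \<le> b" if "i \<le> n" for i using seq_range[of n s i] h that by auto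
  have "(\<Sum>i<n. dist (g (s (Suc i))) (g (s i))) = (\<Sum>i<n. dist (f (s (Suc i))) (f (s i)))"
    using rng assms(1) by (intro sum.cong) auto
  also have "\<dots> \<le> B" using assms(2) h unfolding lenle_def by blast
  finally show "(\<Sum>i<n. dist (g (s (Suc i))) (g (s i))) \<le> B" .
qed

lemma lenle_line:
  assumes "u \<le> v"
  shows "lenle (linepath p q) u v ((v - u) * dist p q)"
  unfolding lenle_def
proof (intro allI impI)
  fix n and s :: "nat \<Rightarrow> real"
  assume h: "s 0 = u \<and> s n = v \<and> (\<forall>i<n. s i \<le> s (Suc i))"
  have d: "dist (linepath p q x) (linepath p q y) = \<bar>x - y\<bar> * dist p q" for x y
  proof -
    have "linepath p q x - linepath p q y = (x - y) *\<^sub>R (q - p)"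
      by (simp add: linepath_def algebra_simps)
    then show ?thesis by (simp add: dist_norm dist_commute norm_minus_commute)
  qed
  have "(\<Sum>i<n. dist (linepath p q (s (Suc i))) (linepath p q (s i))) = (\<Sum>i<n. (s (Suc i) - s i) * dist p q)"
    using h by (intro sum.cong) (auto simp: d)
  also have "\<dots> = (\<Sum>i<n. s (Suc i) - s i) * dist p q" by (simp add: sum_distrib_right)
  also have "\<dots> = (v - u) * dist p q" using h by (simp add: sum_lessThan_telescope)
  finally show "(\<Sum>i<n. dist (linepath p q (s (Suc i))) (linepath p q (s i))) \<le> (v - u) * dist p q" by simp
qed

lemma lenle_prefix:
  assumes "a \<le> a1" "lenle f a b B"
  shows "lenle f a1 b (B - dist (f a1) (f a))"
  unfolding lenle_def
proof (intro allI impI)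
  fix n and s :: "nat \<Rightarrow> real"
  assume h: "s 0 = a1 \<and> s n = b \<and> (\<forall>i<n. s i \<le> s (Suc i))"
  define s' where "s' = (\<lambda>i. if i = 0 then a else s (i - 1))"
  have m: "\<forall>i<Suc n. s' i \<le> s' (Suc i)"
    using h assms(1) by (auto simp: s'_def less_Suc_eq_0_disj)
  have "(\<Sum>i<Suc n. dist (f (s' (Suc i))) (f (s' i))) \<le> B"
    using assms(2) m h unfolding lenle_def
    by (erule_tac x="Suc n" in allE, erule_tac x="s'" in allE) (simp add: s'_def)
  moreover have "(\<Sum>i<Suc n. dist (f (s' (Suc i))) (f (s' i))) =
      dist (f a1) (f a) + (\<Sum>i<n. dist (f (s (Suc i))) (f (s i)))"
    by (subst sum.lessThan_Suc_shift) (simp add: s'_def h)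
  ultimately show "(\<Sum>i<n. dist (f (s (Suc i))) (f (s i))) \<le> B - dist (f a1) (f a)" by simp
qed

lemma lenle_ext_left:
  assumes "a \<le> a1" "lenle f a b B"
  shows "lenle f a1 b B"
  using lenle_prefix[OF assms] by (rule lenle_mono) simp

lemma lenle_split_aux:
  "\<forall>a s B1. s 0 = a \<and> s n = c \<and> (\<forall>i<n. s i \<le> s (Suc i)) \<and> a \<le> b \<and> b \<le> c \<and>
     lenle f a b B1 \<and> lenle f b c B2 \<longrightarrow> (\<Sum>i<n. dist (f (s (Suc i))) (f (s i))) \<le> B1 + B2"
proof (induction n)
  case 0
  show ?case
  proof (intro allI impI)
    fix a s B1
    assume h: "s 0 = a \<and> s 0 = c \<and> (\<forall>i<0. s i \<le> s (Suc i)) \<and> a \<le> b \<and> b \<le> c \<and>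
     lenle f a b B1 \<and> lenle f b c B2"
    have "0 \<le> B1" using lenle_nonneg[of f a b B1] h by blast
    moreover have "0 \<le> B2" using lenle_nonneg[of f b c B2] h by blast
    ultimately show "(\<Sum>i<0. dist (f (s (Suc i))) (f (s i))) \<le> B1 + B2" by simp
  qed
next
  case (Suc m)
  show ?case
  proof (intro allI impI)
    fix a s B1
    assume h: "s 0 = a \<and> s (Suc m) = c \<and> (\<forall>i<Suc m. s i \<le> s (Suc i)) \<and> a \<le> b \<and> b \<le> c \<and>
     lenle f a b B1 \<and> lenle f b c B2"
    have eq: "(\<Sum>i<Suc m. dist (f (s (Suc i))) (f (s i))) =
       dist (f (s 1)) (f a) + (\<Sum>i<m. dist (f (s (Suc (Suc i)))) (f (s (Suc i))))"
      by (subst sum.lessThan_Suc_shift) (simp add: h)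
    have a1: "a \<le> s 1" using h by auto
    have s1c: "s 1 \<le> c" using seq_range(2)[of "Suc m" s 1] h by auto
    show "(\<Sum>i<Suc m. dist (f (s (Suc i))) (f (s i))) \<le> B1 + B2"
    proof (cases "s 1 \<le> b")
      case True
      have "(\<Sum>i<m. dist (f (s (Suc (Suc i)))) (f (s (Suc i)))) \<le> (B1 - dist (f (s 1)) (f a)) + B2"
      proof (rule Suc.IH[rule_format, of "\<lambda>i. s (Suc i)" "s 1" "B1 - dist (f (s 1)) (f a)"], intro conjI)
        show "lenle f (s 1) b (B1 - dist (f (s 1)) (f a))" using lenle_prefix[OF a1, of f b B1] h by blast
      qed (use h True in auto)
      then show ?thesis using eq by simp
    next
      case False
      have b1: "b \<le> s 1" using False by simp
      have t: "(\<Sum>i<m. dist (f (s (Suc (Suc i)))) (f (s (Suc i)))) \<le> B2 - dist (f (s 1)) (f b)"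
      proof -
        have L: "lenle f (s 1) c (B2 - dist (f (s 1)) (f b))" using lenle_prefix[OF b1, of f c B2] h by simp
        have "\<forall>i<m. s (Suc i) \<le> s (Suc (Suc i))" using h by simp
        then show ?thesis using L h unfolding lenle_def
          by (erule_tac x=m in allE, erule_tac x="\<lambda>i. s (Suc i)" in allE) simp
      qed
      have "dist (f b) (f a) \<le> B1" using lenle_dist[of f a b B1] h by (simp add: dist_commute)
      moreover have "dist (f (s 1)) (f a) \<le> dist (f (s 1)) (f b) + dist (f b) (f a)"
        by (rule dist_triangle)
      ultimately show ?thesis using eq t by simp
    qed
  qed
qed

lemma lenle_split:
  assumes "a \<le> b" "b \<le> c" "lenle f a b B1" "lenle f b c B2"
  shows "lenle f a c (B1 + B2)"
  unfolding lenle_def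
proof (intro allI impI)
  fix n and s :: "nat \<Rightarrow> real"
  assume h: "s 0 = a \<and> s n = c \<and> (\<forall>i<n. s i \<le> s (Suc i))"
  show "(\<Sum>i<n. dist (f (s (Suc i))) (f (s i))) \<le> B1 + B2"
    by (rule lenle_split_aux[of n c b f B2, rule_format, of s a B1]) (use h assms in simp)
qed

lemma path_length_le:
  assumes "0 \<le> B" "lenle g 0 1 B"
  shows "path_length g \<le> ennreal B"
  unfolding path_length_def
proof (rule SUP_least)
  fix p assume "p \<in> partitions01"
  then obtain n s where p: "p = (n, s)" "s 0 = 0 \<and> s n = 1 \<and> (\<forall>i<n. s i \<le> s (Suc i))"
    unfolding partitions01_def by auto
  then have "(\<Sum>i<n. dist (g (s (Suc i))) (g (s i))) \<le> B"
    using assms(2) unfolding lenle_def by blast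
  then have "(\<Sum>i<fst p. dist (g (snd p (Suc i))) (g (snd p i))) \<le> B" using p by simp
  then show "ennreal (\<Sum>i<fst p. dist (g (snd p (Suc i))) (g (snd p i))) \<le> ennreal B"
    using ennreal_leI by blast
qed

lemma path_length_lenle:
  assumes "0 \<le> B" "path_length g \<le> ennreal B"
  shows "lenle g 0 1 B"
  unfolding lenle_def
proof (intro allI impI)
  fix n and s :: "nat \<Rightarrow> real"
  assume h: "s 0 = 0 \<and> s n = 1 \<and> (\<forall>i<n. s i \<le> s (Suc i))"
  then have "(n, s) \<in> partitions01" unfolding partitions01_def by auto
  then have "ennreal (\<Sum>i<n. dist (g (s (Suc i))) (g (s i))) \<le> path_length g"
    unfolding path_length_def by (rule SUP_upper2) auto
  then have "ennreal (\<Sum>i<n. dist (g (s (Suc i))) (g (s i))) \<le> ennreal B" using assms(2) by simp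
  then show "(\<Sum>i<n. dist (g (s (Suc i))) (g (s i))) \<le> B" using ennreal_le_iff assms(1) by blast
qed


lemma lenle_subpath:
  assumes "u \<le> v" "lenle g (u + (v - u) * a) (u + (v - u) * b) B"
  shows "lenle (subpath u v g) a b B"
proof -
  have "lenle (\<lambda>x. g ((v - u) * x + u)) a b B"
    using lenle_reparam[of a b "\<lambda>x. (v - u) * x + u" g B] assms
    by (simp add: mult_left_mono add.commute)
  then show ?thesis by (simp add: subpath_def)
qed

lemma lenle_from_pl:
  assumes "0 \<le> B" "0 \<le> t" "path_length (subpath 0 t g) \<le> ennreal B"
  shows "lenle g 0 t B"
proof (cases "t = 0")
  case True then show ?thesis using lenle_zero assms by simp
next
  case False
  have L: "lenle (subpath 0 t g) 0 1 B" using path_length_lenle assms by blast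
  have "lenle (\<lambda>x. subpath 0 t g (x / t)) 0 t B"
    using lenle_reparam[of 0 t "\<lambda>x. x / t" "subpath 0 t g" B] L False assms(2)
    by (simp add: divide_right_mono)
  moreover have "(\<lambda>x. subpath 0 t g (x / t)) = g" using False by (simp add: subpath_def)
  ultimately show ?thesis by simp
qed

lemma pl_from_lenle:
  assumes "0 \<le> B" "0 \<le> t" "lenle g 0 t B"
  shows "path_length (subpath 0 t g) \<le> ennreal B"
proof -
  have "lenle (\<lambda>x. g (t * x)) 0 1 B"
    using lenle_reparam[of 0 1 "\<lambda>x. t * x" g B] assms by (simp add: mult_left_mono)
  moreover have "subpath 0 t g = (\<lambda>x. g (t * x))" by (simp add: subpath_def)
  ultimately show ?thesis using path_length_le assms by simp
qed

lemma lenle_join1: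
  assumes "0 \<le> t" "t \<le> 1/2" "lenle g 0 (2 * t) B"
  shows "lenle (g +++ h) 0 t B"
proof -
  have "lenle (\<lambda>x. g (2 * x)) 0 t B"
    using lenle_reparam[of 0 t "\<lambda>x. 2 * x" g B] assms by simp
  then show ?thesis by (rule lenle_cong[rotated]) (use assms in \<open>simp add: joinpaths_def\<close>)
qed

lemma lenle_join2:
  assumes "1/2 \<le> t" "pathfinish g = pathstart h" "lenle g 0 1 B1" "lenle h 0 (2 * t - 1) B2"
  shows "lenle (g +++ h) 0 t (B1 + B2)"
proof (rule lenle_split[of 0 "1/2"])
  show "lenle (g +++ h) 0 (1/2) B1" using lenle_join1[of "1/2" g B1 h] assms by simp
  have "lenle (\<lambda>x. h (2 * x - 1)) (1/2) t B2"
    using lenle_reparam[of "1/2" t "\<lambda>x. 2 * x - 1" h B2] assms by simp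
  then show "lenle (g +++ h) (1/2) t B2"
  proof (rule lenle_cong[rotated])
    fix x assume x: "1/2 \<le> x" "x \<le> t"
    show "h (2 * x - 1) = (g +++ h) x"
    proof (cases "x = 1/2")
      case True
      have "(g +++ h) x = g 1" unfolding True by (simp add: joinpaths_def)
      moreover have "h (2 * x - 1) = h 0" unfolding True by simp
      ultimately show ?thesis using assms(2) by (simp add: pathfinish_def pathstart_def)
    next
      case False then show ?thesis using x by (simp add: joinpaths_def)
    qed
  qed
qed (use assms in auto)


lemma infdist_geI:
  assumes "A \<noteq> {}" "\<And>a. a \<in> A \<Longrightarrow> \<rho> \<le> dist x a"
  shows "\<rho> \<le> infdist x A"
  using assms by (simp add: infdist_def cINF_greatest)

lemma ball_infdist_frontier:
  fixes W :: "pt set"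
  assumes "p \<in> W"
  shows "ball p (infdist p (frontier W)) \<subseteq> W"
proof
  fix y assume y: "y \<in> ball p (infdist p (frontier W))"
  show "y \<in> W"
  proof (rule ccontr)
    assume "y \<notin> W"
    have "0 < infdist p (frontier W)" using y zero_le_dist[of p y] by (simp only: mem_ball)
    then have "p \<in> ball p (infdist p (frontier W))" by simp
    then have "ball p (infdist p (frontier W)) \<inter> frontier W \<noteq> {}"
      using connected_Int_frontier[of "ball p (infdist p (frontier W))" W] y assms \<open>y \<notin> W\<close>
      by blast
    then obtain a where "a \<in> frontier W" "dist p a < infdist p (frontier W)" by auto
    then show False using infdist_le[of a "frontier W" p] by linarith
  qed
qed

lemma le_infdist_frontier:
  fixes W :: "pt set"
  assumes "open W" "bounded W" "ball p \<rho> \<subseteq> W" "p \<in> W"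
  shows "\<rho> \<le> infdist p (frontier W)"
proof -
  have "W \<noteq> UNIV" using assms(2) not_bounded_UNIV by auto
  then have ne: "frontier W \<noteq> {}" using frontier_not_empty assms(4) by blast
  show ?thesis
  proof (rule infdist_geI[OF ne])
    fix a assume "a \<in> frontier W"
    then have "a \<notin> W" using assms(1) frontier_def interior_open by auto
    then have "a \<notin> ball p \<rho>" using assms(3) by auto
    then show "\<rho> \<le> dist p a" by simp
  qed
qed

lemma linepath_dist1: "dist (a::pt) (linepath a b x) = \<bar>x\<bar> * dist a b"
proof -
  have "a - linepath a b x = x *\<^sub>R (a - b)" by (simp add: linepath_def algebra_simps)
  then show ?thesis by (simp add: dist_norm)
qed

lemma linepath_dist2: "dist (linepath (a::pt) b x) b = \<bar>1 - x\<bar> * dist a b"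
proof -
  have "linepath a b x - b = (1 - x) *\<^sub>R (a - b)" by (simp add: linepath_def algebra_simps)
  then show ?thesis by (simp add: dist_norm)
qed

lemma closed_segment_linepath: "(m::pt) \<in> closed_segment a b \<longleftrightarrow> (\<exists>x\<in>{0..1}. m = linepath a b x)"
  by (metis imageE image_eqI path_image_def path_image_linepath)

lemma seg_dist_sum:
  assumes "(m::pt) \<in> closed_segment a b"
  shows "dist a m + dist m b = dist a b"
proof -
  obtain x where x: "x \<in> {0..1}" "m = linepath a b x" using assms closed_segment_linepath by blast
  then show ?thesis using linepath_dist1[of a b x] linepath_dist2[of a b x]
    by (simp add: algebra_simps)
qed

lemma infdist_lip: "infdist x K \<le> infdist y K + dist x y"
  by (rule infdist_triangle)

lemma seg_infdist_lower:
  fixes y y0 :: pt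
  assumes "2 * e \<le> infdist y K" "2 * e \<le> infdist y0 K" "dist y y0 < 2 * e"
    "m \<in> closed_segment y y0"
  shows "e \<le> infdist m K"
proof -
  have s: "dist y m + dist m y0 = dist y y0" using seg_dist_sum assms(4) by blast
  have "infdist y K \<le> infdist m K + dist y m" using infdist_triangle[of y K m] by (simp add: dist_commute)
  moreover have "infdist y0 K \<le> infdist m K + dist m y0" using infdist_triangle[of y0 K m] by (simp add: dist_commute)
  ultimately show ?thesis using assms s by (smt (verit) zero_le_dist)
qed


lemma lp01 [simp]: "linepath a b 1 = b" "linepath a b 0 = a"
  by (simp_all add: linepath_def)

lemma le_k_mult:
  fixes a b k :: real
  assumes "a \<le> b" "0 \<le> b" "1 \<le> k"
  shows "a \<le> k * b"
proof -
  have "1 * b \<le> k * b" using assms by (intro mult_right_mono) auto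
  then show ?thesis using assms by simp
qed

lemma john_from_spine:
  fixes \<Lambda> :: "pt set" and y0 w :: pt and K :: "pt set" and c D :: real
  assumes Wdef: "W = (\<Union>p\<in>\<Lambda>. ball p (infdist p K / 2))"
    and c1: "1 \<le> c"
    and bW: "bounded W"
    and pos: "\<forall>p\<in>\<Lambda>. 0 < infdist p K"
    and Dle: "\<forall>p\<in>\<Lambda>. infdist p K \<le> D"
    and y0: "y0 \<in> \<Lambda>"
    and spine: "\<forall>p\<in>\<Lambda>. \<exists>\<pi>. path \<pi> \<and> (p \<noteq> y0 \<longrightarrow> arc \<pi>) \<and> (p = y0 \<longrightarrow> \<pi> = linepath y0 y0) \<and>
        pathstart \<pi> = p \<and> pathfinish \<pi> = y0 \<and> path_image \<pi> \<subseteq> \<Lambda> \<and>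
        (\<forall>s\<in>{0..1}. lenle \<pi> 0 s (c * infdist (\<pi> s) K))"
    and w: "w \<in> W"
  shows "\<exists>\<beta>. path \<beta> \<and> (w \<noteq> y0 \<longrightarrow> arc \<beta>) \<and> pathstart \<beta> = w \<and> pathfinish \<beta> = y0 \<and>
     path_image \<beta> \<subseteq> W \<and> (\<forall>s\<in>{0..1}. lenle \<beta> 0 s ((3*c+3) * infdist (\<beta> s) (frontier W))) \<and>
     lenle \<beta> 0 1 ((c+1) * D)"
proof -
  define d where "d = (\<lambda>p. infdist p K)"
  have oW: "open W" unfolding Wdef by auto
  have ballW: "ball p (d p / 2) \<subseteq> W" if "p \<in> \<Lambda>" for p using that unfolding Wdef d_def by auto
  have inW: "p \<in> W" if "p \<in> \<Lambda>" for p using ballW[OF that] pos that unfolding d_def by auto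
  have LW: "\<Lambda> \<subseteq> W" using inW by auto
  have fr: "d p \<le> 2 * infdist p (frontier W)" if "p \<in> \<Lambda>" for p
    using le_infdist_frontier[OF oW bW ballW[OF that] inW[OF that]] by simp
  have frnn: "0 \<le> infdist x (frontier W)" for x by (rule infdist_nonneg)
  have D0: "0 < D" using pos[rule_format, OF y0] Dle[rule_format, OF y0] by linarith
  obtain p where p: "p \<in> \<Lambda>" "dist p w < d p / 2" using w unfolding Wdef d_def by auto
  have sg: "m \<in> W \<and> dist w m \<le> infdist m (frontier W)" if m: "m \<in> closed_segment w p" for m
  proof -
    have s: "dist w m + dist m p = dist w p" using seg_dist_sum[OF m] .
    have "ball m (d p / 2 - dist m p) \<subseteq> ball p (d p / 2)"
    proof
      fix x assume "x \<in> ball m (d p / 2 - dist m p)"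
      then have "dist m x < d p / 2 - dist m p" by simp
      moreover have "dist p x \<le> dist p m + dist m x" by (rule dist_triangle)
      ultimately show "x \<in> ball p (d p / 2)" by (simp add: dist_commute)
    qed
    then have b: "ball m (d p / 2 - dist m p) \<subseteq> W" using ballW[OF p(1)] by blast
    have "dist m p < d p / 2" using s p(2) zero_le_dist[of w m] dist_commute[of p w] by linarith
    then have mW: "m \<in> W" using b by auto
    have "d p / 2 - dist m p \<le> infdist m (frontier W)" by (rule le_infdist_frontier[OF oW bW b mW])
    then show ?thesis using mW s p(2) by (simp add: dist_commute)
  qed
  have wp: "w \<in> closed_segment w p" by simp
  obtain \<pi> where \<pi>: "path \<pi>" "p \<noteq> y0 \<longrightarrow> arc \<pi>" "p = y0 \<longrightarrow> \<pi> = linepath y0 y0"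
     "pathstart \<pi> = p" "pathfinish \<pi> = y0" "path_image \<pi> \<subseteq> \<Lambda>"
     "\<forall>s\<in>{0..1}. lenle \<pi> 0 s (c * d (\<pi> s))"
    using spine p(1) unfolding d_def by blast
  show ?thesis
  proof (cases "w = y0")
    case True
    show ?thesis
    proof (intro exI[of _ "linepath y0 y0"] conjI ballI)
      show "path_image (linepath y0 y0) \<subseteq> W" using inW[OF y0] by simp
      fix s :: real assume "s \<in> {0..1}"
      then have "lenle (linepath y0 y0) 0 s 0" using lenle_line[of 0 s y0 y0] by simp
      then show "lenle (linepath y0 y0) 0 s ((3*c+3) * infdist (linepath y0 y0 s) (frontier W))"
        by (rule lenle_mono) (use c1 frnn in simp)
    next
      have "lenle (linepath y0 y0) 0 1 0" using lenle_line[of 0 1 y0 y0] by simp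
      then show "lenle (linepath y0 y0) 0 1 ((c+1) * D)" by (rule lenle_mono) (use c1 D0 in simp)
    qed (use True in auto)
  next
    case wne: False
    define S where "S = {0..1} \<inter> linepath w p -` path_image \<pi>"
    have cS: "closed S" unfolding S_def
      by (rule continuous_closed_preimage) (auto intro: compact_imp_closed compact_path_image \<pi>(1))
    have S1: "1 \<in> S"
    proof -
      have "p \<in> path_image \<pi>" using pathstart_in_path_image[of \<pi>] \<pi>(4) by simp
      then show ?thesis unfolding S_def by (simp add: linepath_def)
    qed
    have bS: "bdd_below S" unfolding S_def by (rule bdd_belowI[of _ 0]) auto
    define lam where "lam = Inf S"
    have lS: "lam \<in> S" unfolding lam_def using closed_contains_Inf[OF _ bS cS] S1 by auto
    have l01: "0 \<le> lam" "lam \<le> 1" using lS unfolding S_def by auto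
    have lmin: "lam \<le> x" if "x \<in> S" for x unfolding lam_def using cInf_lower[OF that bS] .
    define q where "q = linepath w p lam"
    have qimg: "q \<in> path_image \<pi>" using lS unfolding S_def q_def by auto
    have qseg: "q \<in> closed_segment w p" using l01 closed_segment_linepath unfolding q_def by auto
    have dwq: "dist w q \<le> dist w p" using seg_dist_sum[OF qseg] zero_le_dist[of q p] by linarith
    obtain \<tau> where \<tau>: "\<tau> \<in> {0..1}" "\<pi> \<tau> = q" "q = y0 \<longrightarrow> \<tau> = 1"
    proof (cases "q = y0")
      case True then show ?thesis using that[of 1] \<pi>(5) by (auto simp: pathfinish_def)
    next
      case False then show ?thesis using that qimg unfolding path_image_def by auto
    qed
    show ?thesis
    proof (cases "q = y0")
      case qy: True
      have segsub: "closed_segment w y0 \<subseteq> closed_segment w p" using qseg qy subset_closed_segment[of w y0 w p] by simp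
      show ?thesis
      proof (intro exI[of _ "linepath w y0"] conjI ballI impI)
        show "arc (linepath w y0)" using wne by simp
        then show "path (linepath w y0)" by (rule arc_imp_path)
        show "path_image (linepath w y0) \<subseteq> W" using segsub sg by auto
        fix s :: real assume s: "s \<in> {0..1}"
        have "linepath w y0 s \<in> closed_segment w y0"
          using s closed_segment_linepath[of "linepath w y0 s" w y0] by blast
        then have "linepath w y0 s \<in> closed_segment w p" using segsub by blast
        then have "dist w (linepath w y0 s) \<le> infdist (linepath w y0 s) (frontier W)" using sg by blast
        moreover have "dist w (linepath w y0 s) = s * dist w y0" using linepath_dist1 s by simp
        ultimately have "s * dist w y0 \<le> (3*c+3) * infdist (linepath w y0 s) (frontier W)"
          using le_k_mult[of _ "infdist (linepath w y0 s) (frontier W)" "3*c+3"] c1 frnn[of "linepath w y0 s"] by simp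
        have "lenle (linepath w y0) 0 s ((s - 0) * dist w y0)" by (rule lenle_line) (use s in simp)
        then show "lenle (linepath w y0) 0 s ((3*c+3) * infdist (linepath w y0 s) (frontier W))"
          by (rule lenle_mono) (use \<open>s * dist w y0 \<le> _\<close> in simp)
      next
        have "infdist p K \<le> D" using Dle p(1) by blast
        then have "dist w y0 \<le> D / 2" using dwq qy p(2) unfolding d_def by (simp add: dist_commute)
        then have "dist w y0 \<le> (c+1) * D" using le_k_mult[of "dist w y0" D "c+1"] c1 D0 by simp
        have "lenle (linepath w y0) 0 1 ((1 - 0) * dist w y0)" by (rule lenle_line) simp
        then show "lenle (linepath w y0) 0 1 ((c+1) * D)"
          by (rule lenle_mono) (use \<open>dist w y0 \<le> (c+1) * D\<close> in simp)
      qed auto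
    next
      case qny: False
      have pny: "p \<noteq> y0"
      proof
        assume "p = y0"
        then have "path_image \<pi> = {y0}" using \<pi>(3) by simp
        then show False using qimg qny by simp
      qed
      have arcpi: "arc \<pi>" using \<pi>(2) pny by simp
      have t1: "\<tau> < 1"
      proof (rule ccontr)
        assume "\<not> \<tau> < 1" then have "\<tau> = 1" using \<tau>(1) by simp
        then show False using \<tau>(2) qny \<pi>(5) by (simp add: pathfinish_def)
      qed
      define \<sigma> where "\<sigma> = subpath \<tau> 1 \<pi>"
      have arcs: "arc \<sigma>" unfolding \<sigma>_def using arc_subpath_arc[OF arcpi] \<tau>(1) t1 by auto
      have s_start: "pathstart \<sigma> = q" using \<tau> unfolding \<sigma>_def by simp
      have s_fin: "pathfinish \<sigma> = y0" using \<pi>(5) unfolding \<sigma>_def by (simp add: pathfinish_def subpath_def)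
      have s_img: "path_image \<sigma> \<subseteq> \<Lambda>"
        using \<pi>(6) path_image_subpath_subset[of \<tau> 1 \<pi>] \<tau>(1) arc_imp_path[OF arcpi] unfolding \<sigma>_def by auto
      have s_val: "\<sigma> s = \<pi> (\<tau> + (1 - \<tau>) * s)" for s unfolding \<sigma>_def subpath_def by (simp add: add.commute)
      have s_in: "\<sigma> s \<in> \<Lambda>" if "s \<in> {0..1}" for s
        using s_img that unfolding path_image_def by auto
      have s_par: "\<tau> + (1 - \<tau>) * s \<in> {0..1}" if "s \<in> {0..1}" for s
      proof -
        have "(1 - \<tau>) * s \<le> 1 - \<tau>" using that t1 mult_left_le[of s "1 - \<tau>"] by simp
        moreover have "0 \<le> (1 - \<tau>) * s" using that t1 by simp
        ultimately show ?thesis using \<tau>(1) by simp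
      qed
      have s_len: "lenle \<sigma> 0 s (c * d (\<sigma> s))" if s: "s \<in> {0..1}" for s
      proof -
        have "lenle \<pi> 0 (\<tau> + (1 - \<tau>) * s) (c * d (\<sigma> s))" using \<pi>(7) s_par[OF s] s_val by simp
        then have "lenle \<pi> \<tau> (\<tau> + (1 - \<tau>) * s) (c * d (\<sigma> s))" using lenle_ext_left \<tau>(1) by auto
        then show ?thesis unfolding \<sigma>_def using lenle_subpath[of \<tau> 1 \<pi> 0 s] t1 by simp
      qed
      have s_dp: "d p \<le> (1 + c) * d (\<sigma> s)" if s: "s \<in> {0..1}" for s
      proof -
        have "lenle \<pi> 0 (\<tau> + (1 - \<tau>) * s) (c * d (\<sigma> s))" using \<pi>(7) s_par[OF s] s_val by simp
        then have "dist (\<pi> 0) (\<pi> (\<tau> + (1 - \<tau>) * s)) \<le> c * d (\<sigma> s)"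
          using lenle_dist s_par[OF s] by auto
        then have "dist p (\<sigma> s) \<le> c * d (\<sigma> s)" using \<pi>(4) s_val by (simp add: pathstart_def)
        moreover have "d p \<le> d (\<sigma> s) + dist p (\<sigma> s)" unfolding d_def by (rule infdist_triangle)
        ultimately show ?thesis by (simp add: algebra_simps)
      qed
      have s_fr: "c * d (\<sigma> s) \<le> (3*c+3) * infdist (\<sigma> s) (frontier W)" if s: "s \<in> {0..1}" for s
      proof -
        have "c * d (\<sigma> s) \<le> c * (2 * infdist (\<sigma> s) (frontier W))"
          using fr[OF s_in[OF s]] c1 by (intro mult_left_mono) auto
        also have "\<dots> = (2 * c) * infdist (\<sigma> s) (frontier W)" by simp
        also have "\<dots> \<le> (3*c+3) * infdist (\<sigma> s) (frontier W)"
          using c1 frnn[of "\<sigma> s"] by (intro mult_right_mono) auto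
        finally show ?thesis .
      qed
      show ?thesis
      proof (cases "w = q")
        case wq: True
        show ?thesis
        proof (intro exI[of _ \<sigma>] conjI ballI impI)
          show "path \<sigma>" using arcs by (rule arc_imp_path)
          show "path_image \<sigma> \<subseteq> W" using s_img LW by auto
          fix s :: real assume s: "s \<in> {0..1}"
          show "lenle \<sigma> 0 s ((3*c+3) * infdist (\<sigma> s) (frontier W))"
            using s_len[OF s] s_fr[OF s] lenle_mono by blast
        next
          have "\<sigma> 1 = y0" using s_fin by (simp add: pathfinish_def)
          then have "lenle \<sigma> 0 1 (c * d y0)" using s_len[of 1] by simp
          moreover have "c * d y0 \<le> (c+1) * D"
          proof -
            have "c * d y0 \<le> c * D" using Dle y0 c1 unfolding d_def by (intro mult_left_mono) auto
            also have "\<dots> \<le> (c+1) * D" using D0 by (intro mult_right_mono) auto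
            finally show ?thesis .
          qed
          ultimately show "lenle \<sigma> 0 1 ((c+1) * D)" using lenle_mono by blast
        qed (use arcs s_start s_fin wq in auto)
      next
        case wnq: False
        have lpos: "0 < lam"
        proof (rule ccontr)
          assume "\<not> 0 < lam" then have "lam = 0" using l01 by simp
          then show False using wnq unfolding q_def by (simp add: linepath_def)
        qed
        have lin_eq: "linepath w q x = linepath w p (x * lam)" for x
          unfolding q_def linepath_def by (simp add: algebra_simps)
        have inter: "path_image (linepath w q) \<inter> path_image \<sigma> \<subseteq> {pathstart \<sigma>}"
        proof
          fix z assume z: "z \<in> path_image (linepath w q) \<inter> path_image \<sigma>"
          then obtain x where x: "x \<in> {0..1}" "z = linepath w q x"
            unfolding path_image_def by auto
          have "z \<in> path_image \<pi>" using z path_image_subpath_subset[of \<tau> 1 \<pi>] \<tau>(1) arc_imp_path[OF arcpi]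
            unfolding \<sigma>_def by auto
          then have "x * lam \<in> S" unfolding S_def using x l01 lin_eq
            by (auto simp: mult_le_one)
          then have "lam \<le> x * lam" by (rule lmin)
          then have "1 \<le> x" using lpos by (simp add: mult_le_cancel_right1)
          then have "x = 1" using x by simp
          then show "z \<in> {pathstart \<sigma>}" using x s_start by simp
        qed
        define \<beta> where "\<beta> = linepath w q +++ \<sigma>"
        have arcb: "arc \<beta>" unfolding \<beta>_def
          by (rule arc_join) (use wnq arcs s_start inter in auto)
        have segsub: "closed_segment w q \<subseteq> closed_segment w p" using qseg subset_closed_segment[of w q w p] by simp
        have b_img: "path_image \<beta> \<subseteq> W" unfolding \<beta>_def
        proof -
          have "closed_segment w q \<subseteq> W" using segsub sg by blast
          then show "path_image (linepath w q +++ \<sigma>) \<subseteq> W"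
            using path_image_join_subset[of "linepath w q" \<sigma>] s_img LW by auto
        qed
        have dwq2: "dist w q \<le> d p / 2" using dwq p(2) by (simp add: dist_commute)
        show ?thesis
        proof (intro exI[of _ \<beta>] conjI ballI impI)
          show "path \<beta>" using arcb by (rule arc_imp_path)
          show "pathstart \<beta> = w" unfolding \<beta>_def by simp
          show "pathfinish \<beta> = y0" unfolding \<beta>_def using s_fin by simp
          fix s :: real assume s: "s \<in> {0..1}"
          show "lenle \<beta> 0 s ((3*c+3) * infdist (\<beta> s) (frontier W))"
          proof (cases "s \<le> 1/2")
            case True
            have bs: "\<beta> s = linepath w q (2 * s)" unfolding \<beta>_def joinpaths_def using True by simp
            have lqs: "linepath w q (2 * s) \<in> closed_segment w p"
            proof -
              have "2 * s \<in> {0..1}" using s True by simp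
              then have "linepath w q (2 * s) \<in> closed_segment w q"
                using closed_segment_linepath[of "linepath w q (2 * s)" w q] by blast
              then show ?thesis using segsub by blast
            qed
            then have "dist w (linepath w q (2 * s)) \<le> infdist (linepath w q (2 * s)) (frontier W)" using sg by blast
            then have "dist w (\<beta> s) \<le> infdist (\<beta> s) (frontier W)" using bs by simp
            moreover have "dist w (\<beta> s) = (2 * s) * dist w q" using linepath_dist1 s bs by simp
            ultimately have "(2 * s - 0) * dist w q \<le> (3*c+3) * infdist (\<beta> s) (frontier W)"
              using le_k_mult[of _ "infdist (\<beta> s) (frontier W)" "3*c+3"] c1 frnn[of "\<beta> s"] by simp
            have "lenle (linepath w q) 0 (2 * s) ((2 * s - 0) * dist w q)" by (rule lenle_line) (use s in simp)
            then have "lenle (linepath w q) 0 (2 * s) ((3*c+3) * infdist (\<beta> s) (frontier W))"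
              by (rule lenle_mono) (use \<open>(2 * s - 0) * dist w q \<le> _\<close> in simp)
            then have "lenle (linepath w q +++ \<sigma>) 0 s ((3*c+3) * infdist (\<beta> s) (frontier W))"
              using lenle_join1[of s "linepath w q"] s True by simp
            then show ?thesis unfolding \<beta>_def by simp
          next
            case False
            have s2: "2 * s - 1 \<in> {0..1}" using False s by auto
            have bs: "\<beta> s = \<sigma> (2 * s - 1)" unfolding \<beta>_def joinpaths_def using False by simp
            have L1: "lenle (linepath w q) 0 1 (dist w q)" using lenle_line[of 0 1 w q] by simp
            have "lenle \<beta> 0 s (dist w q + c * d (\<sigma> (2 * s - 1)))" unfolding \<beta>_def
            proof (rule lenle_join2)
              show "1/2 \<le> s" using False by simp
              show "pathfinish (linepath w q) = pathstart \<sigma>" using s_start by simp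
              show "lenle (linepath w q) 0 1 (dist w q)" by (rule L1)
              show "lenle \<sigma> 0 (2 * s - 1) (c * d (\<sigma> (2 * s - 1)))" by (rule s_len[OF s2])
            qed
            moreover have "dist w q + c * d (\<sigma> (2 * s - 1)) \<le> (3*c+3) * infdist (\<beta> s) (frontier W)"
            proof -
              have "dist w q \<le> (1 + c) * d (\<sigma> (2 * s - 1)) / 2" using dwq2 s_dp[OF s2] by linarith
              moreover have "d (\<sigma> (2 * s - 1)) \<le> 2 * infdist (\<beta> s) (frontier W)"
                using fr[OF s_in[OF s2]] bs by simp
              moreover have "0 \<le> d (\<sigma> (2 * s - 1))" unfolding d_def by (rule infdist_nonneg)
              ultimately have "dist w q + c * d (\<sigma> (2 * s - 1)) \<le> ((1 + 3 * c) / 2) * d (\<sigma> (2 * s - 1))"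
                by (simp add: algebra_simps)
              also have "\<dots> \<le> ((1 + 3 * c) / 2) * (2 * infdist (\<beta> s) (frontier W))"
                using \<open>d (\<sigma> (2 * s - 1)) \<le> 2 * infdist (\<beta> s) (frontier W)\<close> c1 by (intro mult_left_mono) auto
              also have "\<dots> = (1 + 3 * c) * infdist (\<beta> s) (frontier W)" by simp
              also have "\<dots> \<le> (3*c+3) * infdist (\<beta> s) (frontier W)"
                using frnn[of "\<beta> s"] by (intro mult_right_mono) auto
              finally show ?thesis .
            qed
            ultimately show ?thesis using lenle_mono by blast
          qed
        next
          have L1: "lenle (linepath w q) 0 1 (dist w q)" using lenle_line[of 0 1 w q] by simp
          have "\<sigma> 1 = y0" using s_fin by (simp add: pathfinish_def)
          then have L2: "lenle \<sigma> 0 1 (c * d y0)" using s_len[of 1] by simp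
          have "lenle \<beta> 0 1 (dist w q + c * d y0)" unfolding \<beta>_def
          proof (rule lenle_join2)
            show "pathfinish (linepath w q) = pathstart \<sigma>" using s_start by simp
            show "lenle \<sigma> 0 (2 * 1 - 1) (c * d y0)" using L2 by simp
          qed (use L1 in simp_all)
          moreover have "dist w q + c * d y0 \<le> (c+1) * D"
          proof -
            have "d p \<le> D" "d y0 \<le> D" using Dle p(1) y0 unfolding d_def by auto
            moreover have "c * d y0 \<le> c * D" using \<open>d y0 \<le> D\<close> c1 by (intro mult_left_mono) auto
            ultimately have "dist w q + c * d y0 \<le> D + c * D" using dwq2 D0 by linarith
            then show ?thesis by (simp add: algebra_simps)
          qed
          ultimately show "lenle \<beta> 0 1 ((c+1) * D)" using lenle_mono by blast
        qed (use arcb b_img in auto)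
      qed
    qed
  qed
qed


lemma john_final:
  fixes \<Lambda> :: "pt set" and y0 :: pt and K :: "pt set" and c D :: real
  assumes Wdef: "W = (\<Union>p\<in>\<Lambda>. ball p (infdist p K / 2))"
    and c1: "1 \<le> c"
    and bW: "bounded W"
    and pos: "\<forall>p\<in>\<Lambda>. 0 < infdist p K"
    and Dle: "\<forall>p\<in>\<Lambda>. infdist p K \<le> D"
    and y0: "y0 \<in> \<Lambda>"
    and spine: "\<forall>p\<in>\<Lambda>. \<exists>\<pi>. path \<pi> \<and> (p \<noteq> y0 \<longrightarrow> arc \<pi>) \<and> (p = y0 \<longrightarrow> \<pi> = linepath y0 y0) \<and>
        pathstart \<pi> = p \<and> pathfinish \<pi> = y0 \<and> path_image \<pi> \<subseteq> \<Lambda> \<and>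
        (\<forall>s\<in>{0..1}. lenle \<pi> 0 s (c * infdist (\<pi> s) K))"
  shows "john_domain W (3*c+3) y0 \<and>
    (\<forall>x\<in>W. \<exists>\<beta>. path \<beta> \<and> pathstart \<beta> = x \<and> pathfinish \<beta> = y0 \<and>
        path_image \<beta> \<subseteq> W \<and> path_length \<beta> \<le> ennreal ((c+1) * D) \<and> carrot \<beta> (3*c+3) \<subseteq> W)"
proof -
  have JS: "\<exists>\<beta>. path \<beta> \<and> (w \<noteq> y0 \<longrightarrow> arc \<beta>) \<and> pathstart \<beta> = w \<and> pathfinish \<beta> = y0 \<and>
     path_image \<beta> \<subseteq> W \<and> (\<forall>s\<in>{0..1}. lenle \<beta> 0 s ((3*c+3) * infdist (\<beta> s) (frontier W))) \<and>
     lenle \<beta> 0 1 ((c+1) * D)" if "w \<in> W" for w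
    by (rule john_from_spine[OF Wdef c1 bW pos Dle y0 spine that])
  have oW: "open W" unfolding Wdef by auto
  have y0W: "y0 \<in> W" using y0 pos unfolding Wdef by force
  have J'pos: "0 < 3*c+3" using c1 by simp
  have PL: "path_length (subpath 0 t \<beta>) \<le> ennreal ((3*c+3) * infdist (\<beta> t) (frontier W))"
    if "\<forall>s\<in>{0..1}. lenle \<beta> 0 s ((3*c+3) * infdist (\<beta> s) (frontier W))" "t \<in> {0..1}" for \<beta> t
  proof (rule pl_from_lenle)
    show "0 \<le> (3*c+3) * infdist (\<beta> t) (frontier W)" using J'pos infdist_nonneg[of "\<beta> t" "frontier W"] by simp
  qed (use that in auto)
  have conn: "connected W"
  proof -
    obtain B where B: "\<forall>x\<in>W. path (B x) \<and> pathstart (B x) = x \<and> pathfinish (B x) = y0 \<and> path_image (B x) \<subseteq> W"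
      using JS by metis
    define \<S> where "\<S> = (\<lambda>x. path_image (B x)) ` W"
    have "connected (\<Union>\<S>)"
    proof (rule connected_Union)
      show "connected s" if "s \<in> \<S>" for s using that B unfolding \<S>_def by (auto intro: connected_path_image)
      have "y0 \<in> \<Inter>\<S>" unfolding \<S>_def using B by (auto simp: pathfinish_in_path_image[of "B _", simplified])
      then show "\<Inter>\<S> \<noteq> {}" by blast
    qed
    moreover have "\<Union>\<S> = W"
    proof
      show "\<Union>\<S> \<subseteq> W" unfolding \<S>_def using B by auto
      show "W \<subseteq> \<Union>\<S>"
      proof
        fix x assume x: "x \<in> W"
        then have "x \<in> path_image (B x)" using B pathstart_in_path_image[of "B x"] by simp
        then show "x \<in> \<Union>\<S>" unfolding \<S>_def using x by blast
      qed
    qed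
    ultimately show ?thesis by simp
  qed
  have jd: "john_domain W (3*c+3) y0"
    unfolding john_domain_def
  proof (intro conjI oW conn bW y0W ballI)
    fix x assume x: "x \<in> W"
    show "x = y0 \<or> (\<exists>\<gamma>. arc \<gamma> \<and> pathstart \<gamma> = x \<and> pathfinish \<gamma> = y0 \<and> path_image \<gamma> \<subseteq> W \<and>
        (\<forall>t\<in>{0..1}. path_length (subpath 0 t \<gamma>) \<le> ennreal ((3*c+3) * infdist (\<gamma> t) (frontier W))))"
    proof (cases "x = y0")
      case False
      obtain \<beta> where \<beta>: "path \<beta>" "x \<noteq> y0 \<longrightarrow> arc \<beta>" "pathstart \<beta> = x" "pathfinish \<beta> = y0"
        "path_image \<beta> \<subseteq> W" "\<forall>s\<in>{0..1}. lenle \<beta> 0 s ((3*c+3) * infdist (\<beta> s) (frontier W))"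
        using JS[OF x] by blast
      show ?thesis using \<beta> False PL[OF \<beta>(6)] by blast
    qed simp
  qed
  have rest: "\<exists>\<beta>. path \<beta> \<and> pathstart \<beta> = x \<and> pathfinish \<beta> = y0 \<and>
        path_image \<beta> \<subseteq> W \<and> path_length \<beta> \<le> ennreal ((c+1) * D) \<and> carrot \<beta> (3*c+3) \<subseteq> W"
    if x: "x \<in> W" for x
  proof -
    obtain \<beta> where \<beta>: "path \<beta>" "pathstart \<beta> = x" "pathfinish \<beta> = y0"
        "path_image \<beta> \<subseteq> W" "\<forall>s\<in>{0..1}. lenle \<beta> 0 s ((3*c+3) * infdist (\<beta> s) (frontier W))"
        "lenle \<beta> 0 1 ((c+1) * D)"
      using JS[OF x] by blast
    have D0: "0 < D" using pos Dle y0 by (meson less_le_trans)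
    have pl: "path_length \<beta> \<le> ennreal ((c+1) * D)"
      by (rule path_length_le) (use \<beta>(6) c1 D0 in auto)
    have car: "carrot \<beta> (3*c+3) \<subseteq> W"
    proof -
      have "ball (\<beta> t) (enn2real (path_length (subpath 0 t \<beta>)) / (3*c+3)) \<subseteq> W"
        if t: "t \<in> {0<..1}" for t
      proof -
        have t01: "t \<in> {0..1}" using t by auto
        have btW: "\<beta> t \<in> W" using \<beta>(4) t01 unfolding path_image_def by auto
        have "enn2real (path_length (subpath 0 t \<beta>)) \<le> (3*c+3) * infdist (\<beta> t) (frontier W)"
          by (rule enn2real_leI) (use PL[OF \<beta>(5) t01] J'pos infdist_nonneg[of "\<beta> t" "frontier W"] in auto)
        then have "enn2real (path_length (subpath 0 t \<beta>)) / (3*c+3) \<le> infdist (\<beta> t) (frontier W)"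
          using J'pos by (simp add: divide_le_eq mult.commute)
        then have "ball (\<beta> t) (enn2real (path_length (subpath 0 t \<beta>)) / (3*c+3)) \<subseteq> ball (\<beta> t) (infdist (\<beta> t) (frontier W))"
          by (rule subset_ball)
        also have "\<dots> \<subseteq> W" by (rule ball_infdist_frontier[OF btW])
        finally show ?thesis .
      qed
      then show ?thesis unfolding carrot_def by blast
    qed
    show ?thesis using \<beta>(1-4) pl car by blast
  qed
  show ?thesis using jd rest by blast
qed


lemma sub_lenle:
  assumes "t0 \<le> t'" "t0 \<in> {0..1}" "t' \<in> {0..1}" "s \<in> {0..1}"
    and L: "\<forall>t\<in>{0..1}. lenle \<gamma> 0 t (J * infdist (\<gamma> t) K)"
  shows "lenle (subpath t0 t' \<gamma>) 0 s (J * infdist (subpath t0 t' \<gamma> s) K)"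
proof -
  have sp: "t0 + (t' - t0) * s \<in> {0..1}"
  proof -
    have "(t' - t0) * s \<le> t' - t0" using assms mult_left_le[of s "t' - t0"] by simp
    moreover have "0 \<le> (t' - t0) * s" using assms by simp
    ultimately show ?thesis using assms by simp
  qed
  have e: "subpath t0 t' \<gamma> s = \<gamma> (t0 + (t' - t0) * s)" by (simp add: subpath_def add.commute)
  have "lenle \<gamma> 0 (t0 + (t' - t0) * s) (J * infdist (subpath t0 t' \<gamma> s) K)" using L sp e by simp
  then have "lenle \<gamma> t0 (t0 + (t' - t0) * s) (J * infdist (subpath t0 t' \<gamma> s) K)"
    using lenle_ext_left assms(2) by auto
  then show ?thesis using lenle_subpath[of t0 t' \<gamma> 0 s] assms(1) by simp
qed

lemma spine_construct:
  fixes K A :: "pt set" and G :: "pt \<Rightarrow> real \<Rightarrow> pt" and S :: "pt \<Rightarrow> real" and y0 :: pt and r J :: real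
  assumes J1: "1 \<le> J" and r: "0 < r" and cK: "closed K" and K0: "0 \<in> K" and Ane: "A \<noteq> {}"
    and G: "\<forall>x\<in>A. arc (G x) \<and> S x \<in> {0..1} \<and> (\<forall>t\<in>{0..1}. G x t \<notin> K) \<and>
        (\<forall>t\<in>{0..S x}. norm (G x t) \<le> 3 * r) \<and> norm (G x (S x)) = 3 * r \<and>
        (\<forall>t\<in>{0..1}. lenle (G x) 0 t (J * infdist (G x t) K)) \<and> 2 * (r / J) \<le> infdist (G x (S x)) K"
    and y0: "norm y0 = 3 * r" "2 * (r / J) \<le> infdist y0 K"
    and close: "\<forall>x\<in>A. dist (G x (S x)) y0 < 2 * (r / J)"
    and Ldef: "\<Lambda> = (\<Union>x\<in>A. G x ` {0..S x} \<union> closed_segment (G x (S x)) y0)"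
  shows "y0 \<in> \<Lambda> \<and> (\<forall>p\<in>\<Lambda>. 0 < infdist p K) \<and> (\<forall>p\<in>\<Lambda>. norm p \<le> 3 * r) \<and>
     (\<forall>p\<in>\<Lambda>. infdist p K \<le> 3 * r) \<and>
     (\<forall>p\<in>\<Lambda>. \<exists>\<pi>. path \<pi> \<and> (p \<noteq> y0 \<longrightarrow> arc \<pi>) \<and> (p = y0 \<longrightarrow> \<pi> = linepath y0 y0) \<and>
        pathstart \<pi> = p \<and> pathfinish \<pi> = y0 \<and> path_image \<pi> \<subseteq> \<Lambda> \<and>
        (\<forall>s\<in>{0..1}. lenle \<pi> 0 s ((3 * J^2 + 2) * infdist (\<pi> s) K)))"
proof -
  define c where "c = 3 * J^2 + 2"
  define d where "d = (\<lambda>p. infdist p K)"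
  have Kne: "K \<noteq> {}" using K0 by auto
  have rJ: "0 < r / J" using r J1 by simp
  have "J * 1 \<le> J * J" using J1 by (intro mult_left_mono) auto
  moreover have "0 \<le> J * J" by simp
  ultimately have Jc: "J \<le> c" unfolding c_def power2_eq_square by linarith
  have c1: "2 \<le> c" unfolding c_def by simp
  have segcb: "closed_segment (G x (S x)) y0 \<subseteq> cball 0 (3 * r)" if "x \<in> A" for x
    using G that y0 by (intro closed_segment_subset) (auto simp: dist_norm)
  have seglow: "r / J \<le> d m" if "x \<in> A" "m \<in> closed_segment (G x (S x)) y0" for x m
    unfolding d_def using seg_infdist_lower[of "r/J" "G x (S x)" K y0 m] G that y0 close by auto
  have segL: "closed_segment (G x (S x)) y0 \<subseteq> \<Lambda>" if "x \<in> A" for x using that Ldef by auto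
  have curL: "G x ` {0..S x} \<subseteq> \<Lambda>" if "x \<in> A" for x using that Ldef by auto
  have y0L: "y0 \<in> \<Lambda>" using Ane segL by fastforce
  have posL: "\<forall>p\<in>\<Lambda>. 0 < infdist p K"
  proof
    fix p assume "p \<in> \<Lambda>"
    then obtain x where x: "x \<in> A" "p \<in> G x ` {0..S x} \<or> p \<in> closed_segment (G x (S x)) y0"
      using Ldef by auto
    show "0 < infdist p K"
    proof (cases "p \<in> closed_segment (G x (S x)) y0")
      case True then show ?thesis using seglow[OF x(1) True] rJ unfolding d_def by simp
    next
      case False
      then obtain t where "t \<in> {0..S x}" "p = G x t" using x by auto
      then have "p \<notin> K" using G x(1) by auto
      then show ?thesis using infdist_pos_not_in_closed[OF cK Kne] by simp
    qed
  qed
  have normL: "\<forall>p\<in>\<Lambda>. norm p \<le> 3 * r"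
  proof
    fix p assume "p \<in> \<Lambda>"
    then obtain x where x: "x \<in> A" "p \<in> G x ` {0..S x} \<or> p \<in> closed_segment (G x (S x)) y0"
      using Ldef by auto
    then show "norm p \<le> 3 * r" using G segcb[OF x(1)] by auto
  qed
  have dL: "\<forall>p\<in>\<Lambda>. infdist p K \<le> 3 * r"
    using normL infdist_le[OF K0] by (metis dist_0_norm dist_commute order_trans)
  have segcase: "\<exists>\<pi>. path \<pi> \<and> arc \<pi> \<and> pathstart \<pi> = p \<and> pathfinish \<pi> = y0 \<and> path_image \<pi> \<subseteq> \<Lambda> \<and>
        (\<forall>s\<in>{0..1}. lenle \<pi> 0 s (c * d (\<pi> s)))"
    if x: "x \<in> A" and p: "p \<in> closed_segment (G x (S x)) y0" and pne: "p \<noteq> y0" for x p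
  proof (intro exI[of _ "linepath p y0"] conjI ballI)
    show "arc (linepath p y0)" using pne by simp
    then show "path (linepath p y0)" by (rule arc_imp_path)
    have sub: "closed_segment p y0 \<subseteq> closed_segment (G x (S x)) y0"
      using p subset_closed_segment[of p y0 "G x (S x)" y0] by simp
    then show "path_image (linepath p y0) \<subseteq> \<Lambda>" using segL[OF x] by auto
    fix s :: real assume s: "s \<in> {0..1}"
    have "linepath p y0 s \<in> closed_segment p y0" using s closed_segment_linepath by blast
    then have m: "r / J \<le> d (linepath p y0 s)" using seglow[OF x] sub by blast
    have "dist p y0 \<le> dist (G x (S x)) y0" using seg_dist_sum[OF p] zero_le_dist[of "G x (S x)" p] by linarith
    then have "dist p y0 < 2 * (r / J)" using close x by fastforce
    then have "(s - 0) * dist p y0 \<le> c * d (linepath p y0 s)"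
    proof -
      assume a: "dist p y0 < 2 * (r / J)"
      have "(s - 0) * dist p y0 \<le> dist p y0" using s mult_left_le_one_le[of "dist p y0" s] by simp
      also have "\<dots> \<le> 2 * d (linepath p y0 s)" using a m by simp
      also have "\<dots> \<le> c * d (linepath p y0 s)" using c1 m rJ by (intro mult_right_mono) auto
      finally show ?thesis .
    qed
    moreover have "lenle (linepath p y0) 0 s ((s - 0) * dist p y0)" by (rule lenle_line) (use s in simp)
    ultimately show "lenle (linepath p y0) 0 s (c * d (linepath p y0 s))"
      using lenle_mono by blast
  qed auto
  have spine: "\<exists>\<pi>. path \<pi> \<and> (p \<noteq> y0 \<longrightarrow> arc \<pi>) \<and> (p = y0 \<longrightarrow> \<pi> = linepath y0 y0) \<and>
        pathstart \<pi> = p \<and> pathfinish \<pi> = y0 \<and> path_image \<pi> \<subseteq> \<Lambda> \<and>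
        (\<forall>s\<in>{0..1}. lenle \<pi> 0 s (c * d (\<pi> s)))" if pL: "p \<in> \<Lambda>" for p
  proof (cases "p = y0")
    case True
    show ?thesis
    proof (intro exI[of _ "linepath y0 y0"] conjI ballI impI)
      show "path_image (linepath y0 y0) \<subseteq> \<Lambda>" using y0L by simp
      fix s :: real assume "s \<in> {0..1}"
      then have "lenle (linepath y0 y0) 0 s 0" using lenle_line[of 0 s y0 y0] by simp
      then show "lenle (linepath y0 y0) 0 s (c * d (linepath y0 y0 s))"
        by (rule lenle_mono) (use c1 infdist_nonneg[of y0 K] in \<open>simp add: d_def\<close>)
    qed (use True in auto)
  next
    case pne: False
    obtain x where x: "x \<in> A" "p \<in> G x ` {0..S x} \<or> p \<in> closed_segment (G x (S x)) y0"
      using Ldef pL by auto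
    show ?thesis
    proof (cases "p \<in> closed_segment (G x (S x)) y0")
      case True then show ?thesis using segcase[OF x(1) True pne] pne by blast
    next
      case pns: False
      define \<gamma> where "\<gamma> = G x"
      define \<sigma> where "\<sigma> = S x"
      define sg where "sg = closed_segment (\<gamma> \<sigma>) y0"
      have Gx: "arc \<gamma>" "\<sigma> \<in> {0..1}" "\<forall>t\<in>{0..1}. lenle \<gamma> 0 t (J * infdist (\<gamma> t) K)"
        using G x(1) unfolding \<gamma>_def \<sigma>_def by auto
      obtain t0 where t0: "t0 \<in> {0..\<sigma>}" "p = \<gamma> t0" using x pns unfolding \<gamma>_def \<sigma>_def by auto
      have t01: "t0 \<in> {0..1}" using t0 Gx(2) by auto
      define T where "T = {t0..\<sigma>} \<inter> \<gamma> -` sg"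
      have contg: "continuous_on {t0..\<sigma>} \<gamma>"
        using arc_imp_path[OF Gx(1)] unfolding path_def
        by (rule continuous_on_subset) (use t01 Gx(2) in auto)
      have cT: "closed T" unfolding T_def sg_def by (rule continuous_closed_preimage[OF contg]) auto
      have sT: "\<sigma> \<in> T" unfolding T_def sg_def using t0 by auto
      have bT: "bdd_below T" unfolding T_def by (rule bdd_belowI[of _ t0]) auto
      define t' where "t' = Inf T"
      have t'T: "t' \<in> T" unfolding t'_def using closed_contains_Inf[OF _ bT cT] sT by auto
      have t'min: "t' \<le> t" if "t \<in> T" for t unfolding t'_def using cInf_lower[OF that bT] .
      have t'r: "t0 \<le> t'" "t' \<le> \<sigma>" using t'T unfolding T_def by auto
      have t'01: "t' \<in> {0..1}" using t'r t01 Gx(2) by auto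
      define q where "q = \<gamma> t'"
      have qsg: "q \<in> sg" using t'T unfolding T_def q_def by auto
      have tne: "t0 \<noteq> t'"
      proof
        assume "t0 = t'" then have "p \<in> sg" using qsg t0 q_def by simp
        then show False using pns unfolding sg_def \<gamma>_def \<sigma>_def by simp
      qed
      then have tlt: "t0 < t'" using t'r by simp
      have sparc: "arc (subpath t0 t' \<gamma>)" using arc_subpath_arc[OF Gx(1) t01 t'01 tne] .
      have spimg: "path_image (subpath t0 t' \<gamma>) = \<gamma> ` {t0..t'}" using path_image_subpath[of t0 t' \<gamma>] tlt by simp
      have spL: "path_image (subpath t0 t' \<gamma>) \<subseteq> \<Lambda>"
        using spimg curL[OF x(1)] t0 t'r unfolding \<gamma>_def \<sigma>_def by auto
      have splen: "lenle (subpath t0 t' \<gamma>) 0 s (J * infdist (subpath t0 t' \<gamma> s) K)" if "s \<in> {0..1}" for s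
        using sub_lenle[OF _ t01 t'01 that Gx(3)] tlt by simp
      have qnorm: "norm q \<le> 3 * r" using qsg segcb[OF x(1)] unfolding sg_def \<gamma>_def \<sigma>_def by auto
      have dq: "d q \<le> 3 * r" using qnorm infdist_le[OF K0, of q] unfolding d_def by simp
      show ?thesis
      proof (cases "q = y0")
        case qy: True
        show ?thesis
        proof (intro exI[of _ "subpath t0 t' \<gamma>"] conjI ballI impI)
          show "path (subpath t0 t' \<gamma>)" using sparc by (rule arc_imp_path)
          show "pathstart (subpath t0 t' \<gamma>) = p" using t0 by simp
          show "pathfinish (subpath t0 t' \<gamma>) = y0" using qy q_def by simp
          fix s :: real assume s: "s \<in> {0..1}"
          show "lenle (subpath t0 t' \<gamma>) 0 s (c * d (subpath t0 t' \<gamma> s))"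
            using splen[OF s] lenle_mono Jc infdist_nonneg unfolding d_def
            by (metis mult_right_mono)
        qed (use sparc spL pne in auto)
      next
        case qny: False
        define \<pi> where "\<pi> = subpath t0 t' \<gamma> +++ linepath q y0"
        have lsub: "closed_segment q y0 \<subseteq> sg" using qsg subset_closed_segment[of q y0 "\<gamma> \<sigma>" y0] unfolding sg_def by simp
        have inter: "path_image (subpath t0 t' \<gamma>) \<inter> path_image (linepath q y0) \<subseteq> {pathstart (linepath q y0)}"
        proof
          fix z assume z: "z \<in> path_image (subpath t0 t' \<gamma>) \<inter> path_image (linepath q y0)"
          then obtain t where t: "t \<in> {t0..t'}" "z = \<gamma> t" using spimg by auto
          have "z \<in> sg" using z lsub by auto
          then have "t \<in> T" unfolding T_def using t t'r by auto
          then have "t = t'" using t'min t by fastforce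
          then show "z \<in> {pathstart (linepath q y0)}" using t q_def by simp
        qed
        have arcpi: "arc \<pi>" unfolding \<pi>_def by (rule arc_join) (use sparc qny inter q_def in auto)
        show ?thesis
        proof (intro exI[of _ \<pi>] conjI ballI impI)
          show "arc \<pi>" by (rule arcpi)
          show "path \<pi>" using arcpi by (rule arc_imp_path)
          show "pathstart \<pi> = p" unfolding \<pi>_def using t0 by simp
          show "pathfinish \<pi> = y0" unfolding \<pi>_def by simp
          show "path_image \<pi> \<subseteq> \<Lambda>" unfolding \<pi>_def
            using path_image_join_subset[of "subpath t0 t' \<gamma>" "linepath q y0"] spL lsub segL[OF x(1)]
            unfolding sg_def \<gamma>_def \<sigma>_def by auto
          fix s :: real assume s: "s \<in> {0..1}"
          show "lenle \<pi> 0 s (c * d (\<pi> s))"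
          proof (cases "s \<le> 1/2")
            case True
            have e: "\<pi> s = subpath t0 t' \<gamma> (2 * s)" unfolding \<pi>_def joinpaths_def using True by simp
            have s2: "2 * s \<in> {0..1}" using s True by simp
            have "lenle (subpath t0 t' \<gamma>) 0 (2 * s) (c * d (\<pi> s))"
              using splen[OF s2] e lenle_mono Jc infdist_nonneg unfolding d_def
              by (metis mult_right_mono)
            then have "lenle (subpath t0 t' \<gamma> +++ linepath q y0) 0 s (c * d (\<pi> s))"
              using lenle_join1[of s "subpath t0 t' \<gamma>"] s True by simp
            then show ?thesis unfolding \<pi>_def by simp
          next
            case False
            have e: "\<pi> s = linepath q y0 (2 * s - 1)" unfolding \<pi>_def joinpaths_def using False by simp
            have s2: "2 * s - 1 \<in> {0..1}" using s False by simp
            have L1: "lenle (subpath t0 t' \<gamma>) 0 1 (J * d q)"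
              using splen[of 1] q_def unfolding d_def by (simp add: subpath_def)
            have L2: "lenle (linepath q y0) 0 (2 * s - 1) ((2 * s - 1 - 0) * dist q y0)"
              by (rule lenle_line) (use s2 in simp)
            have "lenle (subpath t0 t' \<gamma> +++ linepath q y0) 0 s (J * d q + (2 * s - 1 - 0) * dist q y0)"
            proof (rule lenle_join2)
              show "1/2 \<le> s" using False by simp
              show "pathfinish (subpath t0 t' \<gamma>) = pathstart (linepath q y0)" using q_def by simp
            qed (use L1 L2 in auto)
            moreover have "J * d q + (2 * s - 1 - 0) * dist q y0 \<le> c * d (\<pi> s)"
            proof -
              have m: "\<pi> s \<in> closed_segment (\<gamma> \<sigma>) y0"
              proof -
                have "linepath q y0 (2 * s - 1) \<in> closed_segment q y0" using s2 closed_segment_linepath by blast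
                then show ?thesis using e lsub unfolding sg_def by auto
              qed
              have dm: "r / J \<le> d (\<pi> s)" using seglow[OF x(1)] m unfolding \<gamma>_def \<sigma>_def by blast
              have dqy: "dist q y0 \<le> dist (\<gamma> \<sigma>) y0"
                using seg_dist_sum[of q "\<gamma> \<sigma>" y0] qsg zero_le_dist[of "\<gamma> \<sigma>" q] unfolding sg_def by linarith
              have dqy2: "dist q y0 < 2 * (r / J)" using dqy close x(1) unfolding \<gamma>_def \<sigma>_def by fastforce
              have "(2 * s - 1 - 0) * dist q y0 \<le> dist q y0" using s2 mult_left_le_one_le[of "dist q y0" "2 * s - 1"] by simp
              then have "J * d q + (2 * s - 1 - 0) * dist q y0 \<le> J * (3 * r) + 2 * (r / J)"
                using dq dqy2 J1 by (smt (verit) mult_left_mono)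
              also have "\<dots> = c * (r / J)" unfolding c_def using J1 by (simp add: field_simps power2_eq_square)
              also have "\<dots> \<le> c * d (\<pi> s)" using dm c1 by (intro mult_left_mono) auto
              finally show ?thesis .
            qed
            ultimately show ?thesis unfolding \<pi>_def using lenle_mono by blast
          qed
        qed (use pne in simp)
      qed
    qed
  qed
  show ?thesis using y0L posL normL dL spine unfolding c_def d_def by blast
qed


lemma david_exit:
  fixes \<gamma> :: "real \<Rightarrow> pt" and x :: pt and K :: "pt set"
  assumes arc: "arc \<gamma>" and st: "pathstart \<gamma> = x" and xr: "norm x < r" and r: "0 < r"
    and out: "\<not> path_image \<gamma> \<subseteq> ball x (4 * r)"
    and L: "\<forall>t\<in>{0..1}. lenle \<gamma> 0 t (J * infdist (\<gamma> t) K)" and J1: "1 \<le> J"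
  shows "\<exists>\<sigma>\<in>{0..1}. norm (\<gamma> \<sigma>) = 3 * r \<and> (\<forall>t\<in>{0..\<sigma>}. norm (\<gamma> t) \<le> 3 * r) \<and>
     2 * (r / J) \<le> infdist (\<gamma> \<sigma>) K"
proof -
  have cont: "continuous_on {0..1} (\<lambda>t. norm (\<gamma> t))"
    using arc_imp_path[OF arc] unfolding path_def by (intro continuous_intros)
  have g0: "\<gamma> 0 = x" using st by (simp add: pathstart_def)
  have "\<exists>t1\<in>{0..1}. \<gamma> t1 \<notin> ball x (4 * r)" using out unfolding path_image_def by blast
  then obtain t1 where t1: "t1 \<in> {0..1}" "\<gamma> t1 \<notin> ball x (4 * r)" by blast
  have "4 * r \<le> dist x (\<gamma> t1)" using t1 by simp
  moreover have "dist x (\<gamma> t1) \<le> norm x + norm (\<gamma> t1)" by (simp add: dist_norm norm_triangle_ineq4)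
  ultimately have n1: "3 * r \<le> norm (\<gamma> t1)" using xr by linarith
  have ivt: "\<exists>s\<in>{0..t}. norm (\<gamma> s) = 3 * r" if "t \<in> {0..1}" "3 * r \<le> norm (\<gamma> t)" for t
  proof -
    have "continuous_on {0..t} (\<lambda>t. norm (\<gamma> t))" by (rule continuous_on_subset[OF cont]) (use that in auto)
    moreover have "norm (\<gamma> 0) \<le> 3 * r" using g0 xr r by simp
    ultimately show ?thesis using IVT'[of "\<lambda>t. norm (\<gamma> t)" 0 "3*r" t] that by auto
  qed
  define Z where "Z = {0..1} \<inter> (\<lambda>t. norm (\<gamma> t)) -` {3 * r}"
  have cZ: "closed Z" unfolding Z_def by (rule continuous_closed_preimage[OF cont]) auto
  obtain s1 where s1: "s1 \<in> {0..t1}" "norm (\<gamma> s1) = 3 * r" using ivt[OF t1(1) n1] by blast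
  have Zne: "s1 \<in> Z" unfolding Z_def using s1 t1 by auto
  have bZ: "bdd_below Z" unfolding Z_def by (rule bdd_belowI[of _ 0]) auto
  define \<sigma> where "\<sigma> = Inf Z"
  have sZ: "\<sigma> \<in> Z" unfolding \<sigma>_def using closed_contains_Inf[OF _ bZ cZ] Zne by auto
  have smin: "\<sigma> \<le> t" if "t \<in> Z" for t unfolding \<sigma>_def using cInf_lower[OF that bZ] .
  have s01: "\<sigma> \<in> {0..1}" and ns: "norm (\<gamma> \<sigma>) = 3 * r" using sZ unfolding Z_def by auto
  have below: "\<forall>t\<in>{0..\<sigma>}. norm (\<gamma> t) \<le> 3 * r"
  proof
    fix t assume t: "t \<in> {0..\<sigma>}"
    show "norm (\<gamma> t) \<le> 3 * r"
    proof (rule ccontr)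
      assume "\<not> norm (\<gamma> t) \<le> 3 * r"
      then have gt: "3 * r < norm (\<gamma> t)" by simp
      have t01: "t \<in> {0..1}" using t s01 by auto
      obtain s where s: "s \<in> {0..t}" "norm (\<gamma> s) = 3 * r" using ivt[OF t01] gt by auto
      then have "s \<in> Z" unfolding Z_def using t01 by auto
      then have "\<sigma> \<le> s" by (rule smin)
      then have "s = t" "t = \<sigma>" using s t by auto
      then show False using s gt by simp
    qed
  qed
  have "dist (\<gamma> 0) (\<gamma> \<sigma>) \<le> J * infdist (\<gamma> \<sigma>) K" using lenle_dist L s01 by auto
  moreover have "norm (\<gamma> \<sigma>) \<le> norm x + dist (\<gamma> 0) (\<gamma> \<sigma>)"
    using norm_triangle_sub[of "\<gamma> \<sigma>" x] g0 by (simp add: dist_norm norm_minus_commute)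
  ultimately have "2 * r \<le> J * infdist (\<gamma> \<sigma>) K" using ns xr by linarith
  then have "2 * (r / J) \<le> infdist (\<gamma> \<sigma>) K" using J1 by (simp add: field_simps)
  then show ?thesis using s01 ns below by blast
qed


lemma cell_lemma:
  fixes K A :: "pt set" and G :: "pt \<Rightarrow> real \<Rightarrow> pt" and S :: "pt \<Rightarrow> real" and y0 :: pt and r J :: real
  assumes J1: "1 \<le> J" and r: "0 < r" and cK: "closed K" and K0: "0 \<in> K" and Ane: "A \<noteq> {}"
    and G: "\<forall>x\<in>A. arc (G x) \<and> S x \<in> {0..1} \<and> (\<forall>t\<in>{0..1}. G x t \<notin> K) \<and>
        (\<forall>t\<in>{0..S x}. norm (G x t) \<le> 3 * r) \<and> norm (G x (S x)) = 3 * r \<and>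
        (\<forall>t\<in>{0..1}. lenle (G x) 0 t (J * infdist (G x t) K)) \<and> 2 * (r / J) \<le> infdist (G x (S x)) K"
    and G0: "\<forall>x\<in>A. G x 0 = x"
    and y0: "norm y0 = 3 * r" "2 * (r / J) \<le> infdist y0 K"
    and close: "\<forall>x\<in>A. dist (G x (S x)) y0 < 2 * (r / J)"
  shows "\<exists>W. john_domain W (3 * (3 * J^2 + 2) + 3) y0 \<and> W \<subseteq> ball 0 (5 * r) - K \<and>
     y0 \<in> sphere 0 (3 * r) \<inter> W \<and> A \<subseteq> W \<and>
     (\<forall>x\<in>W. \<exists>\<beta>. path \<beta> \<and> pathstart \<beta> = x \<and> pathfinish \<beta> = y0 \<and> path_image \<beta> \<subseteq> W \<and>
        path_length \<beta> \<le> ennreal ((3 * ((3 * J^2 + 2) + 1)) * r) \<and> carrot \<beta> (3 * (3 * J^2 + 2) + 3) \<subseteq> W)"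
proof -
  define c where "c = 3 * J^2 + 2"
  define \<Lambda> where "\<Lambda> = (\<Union>x\<in>A. G x ` {0..S x} \<union> closed_segment (G x (S x)) y0)"
  define W where "W = (\<Union>p\<in>\<Lambda>. ball p (infdist p K / 2))"
  have SC: "y0 \<in> \<Lambda> \<and> (\<forall>p\<in>\<Lambda>. 0 < infdist p K) \<and> (\<forall>p\<in>\<Lambda>. norm p \<le> 3 * r) \<and>
     (\<forall>p\<in>\<Lambda>. infdist p K \<le> 3 * r) \<and>
     (\<forall>p\<in>\<Lambda>. \<exists>\<pi>. path \<pi> \<and> (p \<noteq> y0 \<longrightarrow> arc \<pi>) \<and> (p = y0 \<longrightarrow> \<pi> = linepath y0 y0) \<and>
        pathstart \<pi> = p \<and> pathfinish \<pi> = y0 \<and> path_image \<pi> \<subseteq> \<Lambda> \<and>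
        (\<forall>s\<in>{0..1}. lenle \<pi> 0 s ((3 * J^2 + 2) * infdist (\<pi> s) K)))"
    by (rule spine_construct[OF J1 r cK K0 Ane G y0 close \<Lambda>_def])
  have SCy0: "y0 \<in> \<Lambda>" using SC[THEN conjunct1] .
  have SCpos: "\<forall>p\<in>\<Lambda>. 0 < infdist p K" using SC[THEN conjunct2, THEN conjunct1] .
  have SCn: "\<forall>p\<in>\<Lambda>. norm p \<le> 3 * r" using SC[THEN conjunct2, THEN conjunct2, THEN conjunct1] .
  have SCd: "\<forall>p\<in>\<Lambda>. infdist p K \<le> 3 * r" using SC[THEN conjunct2, THEN conjunct2, THEN conjunct2, THEN conjunct1] .
  have SCsp: "\<forall>p\<in>\<Lambda>. \<exists>\<pi>. path \<pi> \<and> (p \<noteq> y0 \<longrightarrow> arc \<pi>) \<and> (p = y0 \<longrightarrow> \<pi> = linepath y0 y0) \<and>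
        pathstart \<pi> = p \<and> pathfinish \<pi> = y0 \<and> path_image \<pi> \<subseteq> \<Lambda> \<and>
        (\<forall>s\<in>{0..1}. lenle \<pi> 0 s (c * infdist (\<pi> s) K))"
    using SC[THEN conjunct2, THEN conjunct2, THEN conjunct2, THEN conjunct2] unfolding c_def .
  have c1: "1 \<le> c" unfolding c_def by simp
  have Wsub: "W \<subseteq> ball 0 (5 * r)"
  proof
    fix z assume "z \<in> W"
    then obtain p where p: "p \<in> \<Lambda>" "dist p z < infdist p K / 2" unfolding W_def by auto
    have "norm z \<le> norm p + dist p z" using norm_triangle_sub[of z p] by (simp add: dist_norm norm_minus_commute)
    moreover have "norm p \<le> 3 * r" "infdist p K \<le> 3 * r" using SCn SCd p(1) by auto
    ultimately show "z \<in> ball 0 (5 * r)" using p(2) r by simp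
  qed
  have WK: "W \<inter> K = {}"
  proof -
    have "z \<notin> K" if "z \<in> W" for z
    proof -
      obtain p where p: "p \<in> \<Lambda>" "dist p z < infdist p K / 2" using \<open>z \<in> W\<close> unfolding W_def by auto
      have "infdist p K \<le> infdist z K + dist p z" by (rule infdist_triangle)
      moreover have "0 < infdist p K" using SCpos p(1) by blast
      ultimately have "0 < infdist z K" using p(2) by linarith
      then show ?thesis using infdist_zero[of z K] by auto
    qed
    then show ?thesis by blast
  qed
  have bW: "bounded W" using Wsub bounded_ball bounded_subset by blast
  have JF: "john_domain W (3*c+3) y0 \<and>
    (\<forall>x\<in>W. \<exists>\<beta>. path \<beta> \<and> pathstart \<beta> = x \<and> pathfinish \<beta> = y0 \<and>
        path_image \<beta> \<subseteq> W \<and> path_length \<beta> \<le> ennreal ((c+1) * (3 * r)) \<and> carrot \<beta> (3*c+3) \<subseteq> W)"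
    by (rule john_final[OF W_def c1 bW SCpos SCd SCy0 SCsp])
  have LW: "\<Lambda> \<subseteq> W"
  proof
    fix p assume p: "p \<in> \<Lambda>"
    then have "p \<in> ball p (infdist p K / 2)" using SCpos by auto
    then show "p \<in> W" unfolding W_def using p by blast
  qed
  have AW: "A \<subseteq> W"
  proof
    fix x assume x: "x \<in> A"
    have "G x 0 \<in> G x ` {0..S x}" using G x by auto
    then have "x \<in> \<Lambda>" using G0 x unfolding \<Lambda>_def by force
    then show "x \<in> W" using LW by blast
  qed
  have y0W: "y0 \<in> W" using SCy0 LW by blast
  have e: "(c+1) * (3 * r) = (3 * (c + 1)) * r" by simp
  have "W \<subseteq> ball 0 (5 * r) - K" using Wsub WK by blast
  moreover have "y0 \<in> sphere 0 (3 * r) \<inter> W" using y0W y0(1) by simp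
  ultimately show ?thesis unfolding c_def[symmetric] e[symmetric]
    using JF AW by blast
qed


lemma floor_range:
  fixes y :: pt and r J :: real
  assumes "norm y = 3 * r" "0 < r" "1 \<le> J"
  shows "- int (nat \<lceil>3 * J\<rceil> + 1) \<le> \<lfloor>J * y $ i / r\<rfloor> \<and> \<lfloor>J * y $ i / r\<rfloor> \<le> int (nat \<lceil>3 * J\<rceil> + 1)"
proof -
  have yi: "\<bar>y $ i\<bar> \<le> 3 * r" using component_le_norm_cart[of y i] assms by simp
  have "\<bar>J * y $ i / r\<bar> = J * \<bar>y $ i\<bar> / r" using assms by (simp add: abs_mult)
  also have "\<dots> \<le> J * (3 * r) / r" using yi assms by (intro divide_right_mono mult_left_mono) auto
  also have "\<dots> = 3 * J" using assms by simp
  finally have b: "\<bar>J * y $ i / r\<bar> \<le> 3 * J" .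
  have M: "3 * J + 1 \<le> real_of_int (int (nat \<lceil>3 * J\<rceil> + 1))" using assms
    by (simp add: of_nat_nat)
  have f1: "real_of_int \<lfloor>J * y $ i / r\<rfloor> \<le> J * y $ i / r" by (rule of_int_floor_le)
  have f2: "J * y $ i / r - 1 < real_of_int \<lfloor>J * y $ i / r\<rfloor>" using floor_correct[of "J * y $ i / r"] by simp
  define m where "m = int (nat \<lceil>3 * J\<rceil> + 1)"
  have b1: "J * y $ i / r \<le> 3 * J" using abs_le_D1[OF b] .
  have b2: "- (J * y $ i / r) \<le> 3 * J" using abs_le_D2[OF b] .
  have "- real_of_int m \<le> real_of_int \<lfloor>J * y $ i / r\<rfloor>"
    using b2 M f2 unfolding m_def[symmetric] by linarith
  then have "real_of_int (- m) \<le> real_of_int \<lfloor>J * y $ i / r\<rfloor>" by simp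
  moreover have "real_of_int \<lfloor>J * y $ i / r\<rfloor> \<le> real_of_int m"
    using b1 M f1 unfolding m_def[symmetric] by linarith
  ultimately show ?thesis unfolding m_def[symmetric] of_int_le_iff by simp
qed


lemma code_bounds:
  fixes a b :: int and M :: nat
  assumes "0 \<le> a" "a \<le> 2 * int M" "0 \<le> b" "b \<le> 2 * int M"
  shows "nat (a * (2 * int M + 1) + b) + 1 \<in> {1..(2 * M + 1)^2}"
proof -
  have "a * (2 * int M + 1) \<le> (2 * int M) * (2 * int M + 1)" using assms by (intro mult_right_mono) auto
  then have "a * (2 * int M + 1) + b + 1 \<le> (2 * int M + 1)^2" using assms by (simp add: power2_eq_square algebra_simps)
  moreover have "0 \<le> a * (2 * int M + 1) + b" using assms by simp
  ultimately have "int (nat (a * (2 * int M + 1) + b) + 1) \<le> int ((2 * M + 1)^2)" by (simp add: ac_simps)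
  then show ?thesis by (simp only: of_nat_le_iff) simp
qed

lemma code_inj:
  fixes a b a' b' m :: int
  assumes "0 \<le> b" "b < m" "0 \<le> b'" "b' < m" "a * m + b = a' * m + b'"
  shows "a = a' \<and> b = b'"
proof -
  have m: "0 < m" using assms by simp
  have "b = (a * m + b) mod m" using assms(1,2) by simp
  also have "\<dots> = (a' * m + b') mod m" using assms(5) by simp
  also have "\<dots> = b'" using assms(3,4) by simp
  finally have bb: "b = b'" .
  then have "a * m = a' * m" using assms(5) by simp
  then have "a = a'" using m by simp
  then show ?thesis using bb by simp
qed

lemma floor_close:
  fixes x x' :: real
  assumes "\<lfloor>x\<rfloor> = \<lfloor>x'\<rfloor>"
  shows "\<bar>x - x'\<bar> < 1"
proof -
  have "real_of_int \<lfloor>x\<rfloor> \<le> x" "x < real_of_int \<lfloor>x\<rfloor> + 1" using floor_correct[of x] by auto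
  moreover have "real_of_int \<lfloor>x'\<rfloor> \<le> x'" "x' < real_of_int \<lfloor>x'\<rfloor> + 1" using floor_correct[of x'] by auto
  ultimately show ?thesis using assms by (simp add: abs_less_iff) linarith
qed

lemma cell_close:
  fixes y y' :: pt and r J :: real
  assumes "\<lfloor>J * y $ 1 / r\<rfloor> = \<lfloor>J * y' $ 1 / r\<rfloor>" "\<lfloor>J * y $ 2 / r\<rfloor> = \<lfloor>J * y' $ 2 / r\<rfloor>"
    "0 < r" "1 \<le> J"
  shows "dist y y' < 2 * (r / J)"
proof -
  have comp: "\<bar>y $ i - y' $ i\<bar> < r / J" if "\<lfloor>J * y $ i / r\<rfloor> = \<lfloor>J * y' $ i / r\<rfloor>" for i
  proof -
    have "\<bar>J * y $ i / r - J * y' $ i / r\<bar> < 1" using floor_close[OF that] .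
    moreover have "J * y $ i / r - J * y' $ i / r = (J / r) * (y $ i - y' $ i)" by (simp add: algebra_simps)
    ultimately have "(J / r) * \<bar>y $ i - y' $ i\<bar> < 1" using assms by (simp add: abs_mult)
    then show ?thesis using assms by (simp add: field_simps)
  qed
  have "dist y y' = norm (y - y')" by (simp add: dist_norm)
  also have "\<dots> \<le> (\<Sum>i\<in>UNIV. \<bar>(y - y') $ i\<bar>)" by (rule norm_le_l1_cart)
  also have "\<dots> = \<bar>y $ 1 - y' $ 1\<bar> + \<bar>y $ 2 - y' $ 2\<bar>" by (simp add: sum_2)
  also have "\<dots> < 2 * (r / J)" using comp[OF assms(1)] comp[OF assms(2)] by simp
  finally show ?thesis .
qed


lemma main_fixed:
  fixes \<Omega> K :: "pt set" and J r :: real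
  assumes J1: "1 \<le> J" and cK: "closed K" and K0: "0 \<in> K" and KO: "K \<subseteq> closure \<Omega>" and oO: "open \<Omega>"
    and dav: "david_property \<Omega> K J" and r: "0 < r" and rF: "r < infdist 0 (frontier \<Omega>) / 2 / 9"
  shows "\<exists>n W w. n \<le> (2 * (nat \<lceil>3 * J\<rceil> + 1) + 1)^2 \<and>
             ball 0 r - K \<subseteq> (\<Union>j\<in>{1..n}. closure (W j)) \<and>
             (\<forall>j\<in>{1..n}.
                (\<exists>x0. john_domain (W j) (3 * (3 * J^2 + 2) + 3) x0) \<and>
                W j \<subseteq> ball 0 (5 * r) - K \<and>
                w j \<in> sphere 0 (3 * r) \<inter> W j \<and>
                (\<forall>x \<in> W j. \<exists>\<beta>. path \<beta> \<and> pathstart \<beta> = x \<and> pathfinish \<beta> = w j \<and>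
                   path_image \<beta> \<subseteq> W j \<and> path_length \<beta> \<le> ennreal ((3 * ((3 * J^2 + 2) + 1)) * r) \<and>
                   carrot \<beta> (3 * (3 * J^2 + 2) + 3) \<subseteq> W j))"
proof -
  define M where "M = nat \<lceil>3 * J\<rceil> + 1"
  define F where "F = frontier \<Omega>"
  define J' where "J' = 3 * (3 * J^2 + 2) + 3"
  define C2 where "C2 = 3 * ((3 * J^2 + 2) + 1)"
  have d0: "18 * r < infdist 0 F" using rF unfolding F_def by simp
  have Fne: "F \<noteq> {}" using d0 r by (auto simp: infdist_def)
  have O0: "0 \<in> \<Omega>"
  proof -
    have "0 \<in> closure \<Omega>" using K0 KO by blast
    moreover have "0 \<notin> F" using infdist_zero[of 0 F] d0 r by auto
    ultimately show ?thesis unfolding F_def frontier_def using interior_open[OF oO] by auto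
  qed
  have ballO: "ball 0 (infdist 0 F) \<subseteq> \<Omega>" unfolding F_def by (rule ball_infdist_frontier[OF O0])
  define B where "B = ball 0 r - K"
  have data: "\<exists>p. arc (fst p) \<and> fst p 0 = x \<and> snd p \<in> {0..1} \<and> (\<forall>t\<in>{0..1}. fst p t \<notin> K) \<and>
        (\<forall>t\<in>{0..snd p}. norm (fst p t) \<le> 3 * r) \<and> norm (fst p (snd p)) = 3 * r \<and>
        (\<forall>t\<in>{0..1}. lenle (fst p) 0 t (J * infdist (fst p t) K)) \<and> 2 * (r / J) \<le> infdist (fst p (snd p)) K"
    if xB: "x \<in> B" for x
  proof -
    have xr: "norm x < r" and xK: "x \<notin> K" using xB unfolding B_def by auto
    have xO: "x \<in> \<Omega>" using ballO xr d0 r by (auto simp: subset_iff)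
    have "infdist 0 F \<le> infdist x F + dist 0 x" by (rule infdist_triangle)
    then have rho: "4 * r \<le> infdist x (frontier \<Omega>) / 2" using d0 xr r unfolding F_def by simp
    have xOK: "x \<in> \<Omega> - K" using xO xK by blast
    have r4: "0 < 4 * r \<and> 4 * r \<le> infdist x (frontier \<Omega>) / 2" using rho r by simp
    have "\<exists>\<gamma>. arc \<gamma> \<and> pathstart \<gamma> = x \<and> path_image \<gamma> \<subseteq> \<Omega> - K \<and>
              \<not> path_image \<gamma> \<subseteq> ball x (4 * r) \<and>
              (\<forall>t\<in>{0..1}. path_length (subpath 0 t \<gamma>) \<le> ennreal (J * infdist (\<gamma> t) K))"
      using dav[unfolded david_property_def, rule_format, OF xOK r4] .
    then obtain \<gamma> where \<gamma>: "arc \<gamma>" "pathstart \<gamma> = x" "path_image \<gamma> \<subseteq> \<Omega> - K"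
        "\<not> path_image \<gamma> \<subseteq> ball x (4 * r)"
        "\<forall>t\<in>{0..1}. path_length (subpath 0 t \<gamma>) \<le> ennreal (J * infdist (\<gamma> t) K)"
      by blast
    have L: "\<forall>t\<in>{0..1}. lenle \<gamma> 0 t (J * infdist (\<gamma> t) K)"
    proof
      fix t :: real assume t: "t \<in> {0..1}"
      show "lenle \<gamma> 0 t (J * infdist (\<gamma> t) K)"
      proof (rule lenle_from_pl)
        show "0 \<le> J * infdist (\<gamma> t) K" using J1 infdist_nonneg[of "\<gamma> t" K] by simp
      qed (use t \<gamma>(5) in auto)
    qed
    obtain \<sigma> where \<sigma>: "\<sigma> \<in> {0..1}" "norm (\<gamma> \<sigma>) = 3 * r" "\<forall>t\<in>{0..\<sigma>}. norm (\<gamma> t) \<le> 3 * r"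
        "2 * (r / J) \<le> infdist (\<gamma> \<sigma>) K"
      using david_exit[OF \<gamma>(1,2) xr r \<gamma>(4) L J1] by blast
    have nK: "\<forall>t\<in>{0..1}. \<gamma> t \<notin> K" using \<gamma>(3) unfolding path_image_def by auto
    have g0: "\<gamma> 0 = x" using \<gamma>(2) by (simp add: pathstart_def)
    show ?thesis using \<gamma>(1) g0 \<sigma> nK L by (intro exI[of _ "(\<gamma>, \<sigma>)"]) auto
  qed
  then have "\<forall>x\<in>B. \<exists>p. arc (fst p) \<and> fst p 0 = x \<and> snd p \<in> {0..1} \<and> (\<forall>t\<in>{0..1}. fst p t \<notin> K) \<and>
        (\<forall>t\<in>{0..snd p}. norm (fst p t) \<le> 3 * r) \<and> norm (fst p (snd p)) = 3 * r \<and>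
        (\<forall>t\<in>{0..1}. lenle (fst p) 0 t (J * infdist (fst p t) K)) \<and> 2 * (r / J) \<le> infdist (fst p (snd p)) K"
    by blast
  from bchoice[OF this] obtain f where f: "\<forall>x\<in>B. arc (fst (f x)) \<and> fst (f x) 0 = x \<and> snd (f x) \<in> {0..1} \<and> (\<forall>t\<in>{0..1}. fst (f x) t \<notin> K) \<and>
        (\<forall>t\<in>{0..snd (f x)}. norm (fst (f x) t) \<le> 3 * r) \<and> norm (fst (f x) (snd (f x))) = 3 * r \<and>
        (\<forall>t\<in>{0..1}. lenle (fst (f x)) 0 t (J * infdist (fst (f x) t) K)) \<and> 2 * (r / J) \<le> infdist (fst (f x) (snd (f x))) K"
    by blast
  define G where "G = (\<lambda>x. fst (f x))"
  define S where "S = (\<lambda>x. snd (f x))"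
  define Y where "Y = (\<lambda>x. G x (S x))"
  have GS: "\<forall>x\<in>B. arc (G x) \<and> S x \<in> {0..1} \<and> (\<forall>t\<in>{0..1}. G x t \<notin> K) \<and>
        (\<forall>t\<in>{0..S x}. norm (G x t) \<le> 3 * r) \<and> norm (G x (S x)) = 3 * r \<and>
        (\<forall>t\<in>{0..1}. lenle (G x) 0 t (J * infdist (G x t) K)) \<and> 2 * (r / J) \<le> infdist (G x (S x)) K"
    using f unfolding G_def S_def by blast
  have G0: "\<forall>x\<in>B. G x 0 = x" using f unfolding G_def by blast
  have Yn: "norm (Y x) = 3 * r" if "x \<in> B" for x using GS that unfolding Y_def by blast
  have Yd: "2 * (r / J) \<le> infdist (Y x) K" if "x \<in> B" for x using GS that unfolding Y_def by blast
  define ca where "ca = (\<lambda>x. \<lfloor>J * Y x $ 1 / r\<rfloor> + int M)"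
  define cb where "cb = (\<lambda>x. \<lfloor>J * Y x $ 2 / r\<rfloor> + int M)"
  define ci where "ci = (\<lambda>x. nat (ca x * (2 * int M + 1) + cb x) + 1)"
  have cab: "0 \<le> ca x \<and> ca x \<le> 2 * int M \<and> 0 \<le> cb x \<and> cb x \<le> 2 * int M" if "x \<in> B" for x
    using floor_range[OF Yn[OF that] r J1, of 1] floor_range[OF Yn[OF that] r J1, of 2]
    unfolding ca_def cb_def M_def by auto
  have ci_range: "ci x \<in> {1..(2 * M + 1)^2}" if "x \<in> B" for x
    unfolding ci_def using code_bounds cab[OF that] by blast
  have ci_close: "dist (Y x) (Y x') < 2 * (r / J)" if "x \<in> B" "x' \<in> B" "ci x = ci x'" for x x'
  proof -
    have "ca x * (2 * int M + 1) + cb x = ca x' * (2 * int M + 1) + cb x'"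
    proof -
      have "nat (ca x * (2 * int M + 1) + cb x) = nat (ca x' * (2 * int M + 1) + cb x')"
        using that(3) unfolding ci_def by simp
      moreover have "0 \<le> ca x * (2 * int M + 1) + cb x" "0 \<le> ca x' * (2 * int M + 1) + cb x'"
        using cab[OF that(1)] cab[OF that(2)] by simp_all
      ultimately show ?thesis by simp
    qed
    then have "ca x = ca x' \<and> cb x = cb x'"
      using code_inj[of "cb x" "2 * int M + 1" "cb x'" "ca x" "ca x'"] cab[OF that(1)] cab[OF that(2)] by simp
    then show ?thesis using cell_close[of J "Y x" r "Y x'"] r J1 unfolding ca_def cb_def by simp
  qed
  define A where "A = (\<lambda>j. {x\<in>B. ci x = j})"
  define y0 where "y0 = (\<lambda>j. Y (SOME x. x \<in> A j))"
  have cellW: "\<exists>W. john_domain W J' (y0 j) \<and> W \<subseteq> ball 0 (5 * r) - K \<and>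
     y0 j \<in> sphere 0 (3 * r) \<inter> W \<and> A j \<subseteq> W \<and>
     (\<forall>x\<in>W. \<exists>\<beta>. path \<beta> \<and> pathstart \<beta> = x \<and> pathfinish \<beta> = y0 j \<and> path_image \<beta> \<subseteq> W \<and>
        path_length \<beta> \<le> ennreal (C2 * r) \<and> carrot \<beta> J' \<subseteq> W)" if Aj: "A j \<noteq> {}" for j
  proof -
    define xj where "xj = (SOME x. x \<in> A j)"
    have xj: "xj \<in> A j" unfolding xj_def using Aj by (simp add: some_in_eq)
    have AB: "A j \<subseteq> B" unfolding A_def by auto
    have xjB: "xj \<in> B" using xj AB by blast
    have y0j: "y0 j = Y xj" unfolding y0_def xj_def by simp
    show ?thesis unfolding J'_def C2_def
    proof (rule cell_lemma[OF J1 r cK K0 Aj])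
      show "\<forall>x\<in>A j. arc (G x) \<and> S x \<in> {0..1} \<and> (\<forall>t\<in>{0..1}. G x t \<notin> K) \<and>
        (\<forall>t\<in>{0..S x}. norm (G x t) \<le> 3 * r) \<and> norm (G x (S x)) = 3 * r \<and>
        (\<forall>t\<in>{0..1}. lenle (G x) 0 t (J * infdist (G x t) K)) \<and> 2 * (r / J) \<le> infdist (G x (S x)) K"
        using GS AB by blast
      show "\<forall>x\<in>A j. G x 0 = x" using G0 AB by blast
      show "norm (y0 j) = 3 * r" using Yn[OF xjB] y0j by simp
      show "2 * (r / J) \<le> infdist (y0 j) K" using Yd[OF xjB] y0j by simp
      show "\<forall>x\<in>A j. dist (G x (S x)) (y0 j) < 2 * (r / J)"
      proof
        fix x assume x: "x \<in> A j"
        then have "ci x = ci xj" using xj unfolding A_def by simp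
        then have "dist (Y x) (Y xj) < 2 * (r / J)" using ci_close x xjB AB by blast
        then show "dist (G x (S x)) (y0 j) < 2 * (r / J)" using y0j unfolding Y_def by simp
      qed
    qed
  qed
  then have "\<forall>j\<in>{j. A j \<noteq> {}}. \<exists>W. john_domain W J' (y0 j) \<and> W \<subseteq> ball 0 (5 * r) - K \<and>
     y0 j \<in> sphere 0 (3 * r) \<inter> W \<and> A j \<subseteq> W \<and>
     (\<forall>x\<in>W. \<exists>\<beta>. path \<beta> \<and> pathstart \<beta> = x \<and> pathfinish \<beta> = y0 j \<and> path_image \<beta> \<subseteq> W \<and>
        path_length \<beta> \<le> ennreal (C2 * r) \<and> carrot \<beta> J' \<subseteq> W)" by blast
  from bchoice[OF this] obtain WW where WW: "\<forall>j\<in>{j. A j \<noteq> {}}. john_domain (WW j) J' (y0 j) \<and> WW j \<subseteq> ball 0 (5 * r) - K \<and>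
     y0 j \<in> sphere 0 (3 * r) \<inter> WW j \<and> A j \<subseteq> WW j \<and>
     (\<forall>x\<in>WW j. \<exists>\<beta>. path \<beta> \<and> pathstart \<beta> = x \<and> pathfinish \<beta> = y0 j \<and> path_image \<beta> \<subseteq> WW j \<and>
        path_length \<beta> \<le> ennreal (C2 * r) \<and> carrot \<beta> J' \<subseteq> WW j)"
    by blast
  show ?thesis
  proof (cases "B = {}")
    case True
    show ?thesis unfolding M_def[symmetric]
      by (rule exI[of _ 0]) (use True B_def in auto)
  next
    case False
    then obtain xs where xs: "xs \<in> B" by blast
    define js where "js = ci xs"
    have Ajs: "A js \<noteq> {}" using xs unfolding A_def js_def by auto
    define kk where "kk = (\<lambda>j. if A j \<noteq> {} then j else js)"
    have kk: "A (kk j) \<noteq> {}" for j unfolding kk_def using Ajs by auto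
    show ?thesis unfolding M_def[symmetric] J'_def[symmetric] C2_def[symmetric]
    proof (intro exI[of _ "(2 * M + 1)^2"] exI[of _ "\<lambda>j. WW (kk j)"] exI[of _ "\<lambda>j. y0 (kk j)"] conjI ballI)
      show "ball 0 r - K \<subseteq> (\<Union>j\<in>{1..(2 * M + 1)^2}. closure (WW (kk j)))"
      proof
        fix x assume "x \<in> ball 0 r - K"
        then have x: "x \<in> B" unfolding B_def .
        have xA: "x \<in> A (ci x)" unfolding A_def using x by simp
        then have "kk (ci x) = ci x" unfolding kk_def by auto
        moreover have "x \<in> WW (ci x)" using WW xA by blast
        ultimately have "x \<in> closure (WW (kk (ci x)))" using closure_subset by auto
        then show "x \<in> (\<Union>j\<in>{1..(2 * M + 1)^2}. closure (WW (kk j)))" using ci_range[OF x] by blast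
      qed
      fix j assume "j \<in> {1..(2 * M + 1)^2}"
      have Q: "john_domain (WW (kk j)) J' (y0 (kk j)) \<and> WW (kk j) \<subseteq> ball 0 (5 * r) - K \<and>
         y0 (kk j) \<in> sphere 0 (3 * r) \<inter> WW (kk j) \<and>
         (\<forall>x\<in>WW (kk j). \<exists>\<beta>. path \<beta> \<and> pathstart \<beta> = x \<and> pathfinish \<beta> = y0 (kk j) \<and> path_image \<beta> \<subseteq> WW (kk j) \<and>
            path_length \<beta> \<le> ennreal (C2 * r) \<and> carrot \<beta> J' \<subseteq> WW (kk j))"
        using WW kk[of j] by blast
      then show "\<exists>x0. john_domain (WW (kk j)) J' x0" by blast
      show "WW (kk j) \<subseteq> ball 0 (5 * r) - K" using Q by blast
      show "y0 (kk j) \<in> sphere 0 (3 * r) \<inter> WW (kk j)" using Q by blast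
      fix x assume "x \<in> WW (kk j)"
      then show "\<exists>\<beta>. path \<beta> \<and> pathstart \<beta> = x \<and> pathfinish \<beta> = y0 (kk j) \<and> path_image \<beta> \<subseteq> WW (kk j) \<and>
            path_length \<beta> \<le> ennreal (C2 * r) \<and> carrot \<beta> J' \<subseteq> WW (kk j)" using Q by blast
    qed simp
  qed
qed


theorem lemma3p2:
  fixes J :: real
  assumes "J \<ge> 1"
  shows "\<exists>C N J' C2. C > 0 \<and> J' > 0 \<and> C2 > 0 \<and>
    (\<forall>(\<Omega> :: pt set) u. open \<Omega> \<and> connected \<Omega> \<and> sbv \<Omega> u \<and> MS_local_minimizer \<Omega> u \<and>
       (0::pt) \<in> closure (approx_disc \<Omega> u) - approx_disc \<Omega> u \<and>
       david_property \<Omega> (closure (approx_disc \<Omega> u)) J \<longrightarrow>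
       (\<forall>r. 0 < r \<and> r < (infdist 0 (frontier \<Omega>) / 2) / 9 \<longrightarrow>
          (\<exists>n W w. n \<le> (N::nat) \<and>
             ball 0 r - closure (approx_disc \<Omega> u) \<subseteq> (\<Union>j\<in>{1..n}. closure (W j)) \<and>
             (\<forall>j\<in>{1..n}.
                (\<exists>x0. john_domain (W j) J' x0) \<and>
                W j \<subseteq> ball 0 (C * r) - closure (approx_disc \<Omega> u) \<and>
                w j \<in> sphere 0 (3 * r) \<inter> W j \<and>
                (\<forall>x \<in> W j. \<exists>\<beta>. path \<beta> \<and> pathstart \<beta> = x \<and> pathfinish \<beta> = w j \<and>
                   path_image \<beta> \<subseteq> W j \<and> path_length \<beta> \<le> ennreal (C2 * r) \<and>
                   carrot \<beta> J' \<subseteq> W j)))))"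
  apply (rule exI[of _ "5::real"], rule exI[of _ "(2 * (nat \<lceil>3 * J\<rceil> + 1) + 1)^2"],
    rule exI[of _ "3 * (3 * J^2 + 2) + 3"], rule exI[of _ "3 * ((3 * J^2 + 2) + 1)"])
  proof (intro conjI allI impI)
  show "(0::real) < 5" by simp
  show "0 < 3 * (3 * J^2 + 2) + 3" using assms by (simp add: add_pos_nonneg)
  show "0 < 3 * ((3 * J^2 + 2) + 1)" using assms by (simp add: add_pos_nonneg)
  fix \<Omega> :: "pt set" and u r
  assume H: "open \<Omega> \<and> connected \<Omega> \<and> sbv \<Omega> u \<and> MS_local_minimizer \<Omega> u \<and>
       (0::pt) \<in> closure (approx_disc \<Omega> u) - approx_disc \<Omega> u \<and>
       david_property \<Omega> (closure (approx_disc \<Omega> u)) J"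
    and R: "0 < r \<and> r < (infdist 0 (frontier \<Omega>) / 2) / 9"
  have KO: "closure (approx_disc \<Omega> u) \<subseteq> closure \<Omega>"
    by (rule closure_mono) (auto simp: approx_disc_def)
  show "\<exists>n W w. n \<le> (2 * (nat \<lceil>3 * J\<rceil> + 1) + 1)^2 \<and>
             ball 0 r - closure (approx_disc \<Omega> u) \<subseteq> (\<Union>j\<in>{1..n}. closure (W j)) \<and>
             (\<forall>j\<in>{1..n}.
                (\<exists>x0. john_domain (W j) (3 * (3 * J^2 + 2) + 3) x0) \<and>
                W j \<subseteq> ball 0 (5 * r) - closure (approx_disc \<Omega> u) \<and>
                w j \<in> sphere 0 (3 * r) \<inter> W j \<and>
                (\<forall>x \<in> W j. \<exists>\<beta>. path \<beta> \<and> pathstart \<beta> = x \<and> pathfinish \<beta> = w j \<and>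
                   path_image \<beta> \<subseteq> W j \<and> path_length \<beta> \<le> ennreal ((3 * ((3 * J^2 + 2) + 1)) * r) \<and>
                   carrot \<beta> (3 * (3 * J^2 + 2) + 3) \<subseteq> W j))"
    by (rule main_fixed[OF assms]) (use H R KO in auto)
qed

end
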